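(* The lattice $L=-A_1+A_2+2E_8$ is achiral, i.e., for some cell $P$ of $\Lambda(L)$ there is an automorphism $g$ of $L$ with $g(P)=P$ which is $P$-reversing and $\mathbb{Z}/3$-direct.
   Context: $-A_1$ is the rank one lattice generated by a vector of square $-2$; $A_2$, $E_8$ are positive definite root lattices; $+$ denotes orthogonal sum. For $L$: $V_k=\{v\in L:v^2=k,\ 2vw/v^2\in\mathbb{Z}\ \forall w\in L\}$ ($k=2,6$); $\Lambda(L)=\{x\in L\otimes\mathbb{R}: x^2<0\}/\mathbb{R}^*$; cells are closures of components of the complement in $\Lambda(L)$ of the hyperplanes $v^\perp$, $v\in V_2\cup V_6$. A cell $P$ lifts to two opposite pieces $\pm P^\sharp$ in $\{x^2<0\}/\mathbb{R}_{>0}$; $g$ with $g(P)=P$ is $P$-reversing if $g(P^\sharp)=-P^\sharp$. $g$ is $\mathbb{Z}/3$-direct if it acts trivially on the $3$-primary part (here $\mathbb{Z}/3$) of the discriminant group $L^*/L$. *)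

theory Defs
  imports "HOL-Analysis.Analysis"
begin

text \<open>Gram matrix of the E8 root lattice (indices 0..7): the chain 0-1-2-3-4-5-6
  with node 7 attached to node 4 (Dynkin diagram T(2,3,5)).\<close>
definition e8_edge :: "nat \<Rightarrow> nat \<Rightarrow> bool" where
  "e8_edge i j \<longleftrightarrow> (i < 7 \<and> j < 7 \<and> (i = j + 1 \<or> j = i + 1)) \<or> (i = 4 \<and> j = 7) \<or> (i = 7 \<and> j = 4)"

definition e8_gram :: "nat \<Rightarrow> nat \<Rightarrow> int" where
  "e8_gram i j = (if i = j then 2 else if e8_edge i j then -1 else 0)"

text \<open>Gram matrix of L = (-A1) + A2 + E8 + E8 on the basis indexed 0..18:
  index 0: -A1; indices 1,2: A2; indices 3..10: first E8; 11..18: second E8.\<close>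
definition gramL :: "nat \<Rightarrow> nat \<Rightarrow> int" where
  "gramL i j =
    (if i = 0 \<and> j = 0 then -2
     else if i \<in> {1,2} \<and> j \<in> {1,2} then (if i = j then 2 else -1)
     else if i \<in> {3..10} \<and> j \<in> {3..10} then e8_gram (i - 3) (j - 3)
     else if i \<in> {11..18} \<and> j \<in> {11..18} then e8_gram (i - 11) (j - 11)
     else 0)"

definition idx :: "19 \<Rightarrow> nat" where
  "idx i = nat (Rep_bit1 i)"

definition bf :: "real^19 \<Rightarrow> real^19 \<Rightarrow> real" where
  "bf x y = (\<Sum>i\<in>UNIV. \<Sum>j\<in>UNIV. of_int (gramL (idx i) (idx j)) * x$i * y$j)"

definition latL :: "(real^19) set" where
  "latL = {x. \<forall>i. x$i \<in> \<int>}"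

definition dualL :: "(real^19) set" where
  "dualL = {x. \<forall>w\<in>latL. bf x w \<in> \<int>}"

definition Vk :: "real \<Rightarrow> (real^19) set" where
  "Vk k = {v \<in> latL. bf v v = k \<and> (\<forall>w\<in>latL. 2 * bf v w / bf v v \<in> \<int>)}"

definition negcone :: "(real^19) set" where
  "negcone = {x. bf x x < 0}"

definition mirrors :: "(real^19) set" where
  "mirrors = (\<Union>v\<in>Vk 2 \<union> Vk 6. {x. bf v x = 0})"

text \<open>These sets are cones,
  so they represent subsets of {x^2<0}/R_{>0}; the cell P of Lambda(L) corresponds to
  the R^*-saturated set P^sharp \<union> -P^sharp.\<close>
definition lifted_cell :: "(real^19) set \<Rightarrow> bool" where
  "lifted_cell S \<longleftrightarrow>
     (\<exists>x\<in>negcone - mirrors. S = closure (connected_component_set (negcone - mirrors) x) \<inter> negcone)"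

definition autL :: "(real^19 \<Rightarrow> real^19) \<Rightarrow> bool" where
  "autL g \<longleftrightarrow> linear g \<and> g ` latL = latL \<and> (\<forall>x y. bf (g x) (g y) = bf x y)"

text \<open>g acts trivially on the 3-primary part of L^*/L.\<close>
definition Z3_direct :: "(real^19 \<Rightarrow> real^19) \<Rightarrow> bool" where
  "Z3_direct g \<longleftrightarrow>
     (\<forall>x\<in>dualL. (\<exists>k::nat. (3::real) ^ k *\<^sub>R x \<in> latL) \<longrightarrow> g x - x \<in> latL)"

end

theory Submission imports Defs begin

definition ix :: "nat \<Rightarrow> 19" where "ix k = Abs_bit1 (int k)"

lemma idx_ix: "k < 19 \<Longrightarrow> idx (ix k) = k"
  unfolding idx_def ix_def by (subst Abs_bit1_inverse) auto

lemma idx_lt: "idx i < 19"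
proof -
  have "Rep_bit1 i \<in> {0..<1 + 2 * int CARD(9)}" by (rule Rep_bit1)
  then show ?thesis unfolding idx_def by auto
qed

lemma ix_idx: "ix (idx i) = i"
proof -
  have "Rep_bit1 i \<in> {0..<1 + 2 * int CARD(9)}" by (rule Rep_bit1)
  then show ?thesis unfolding idx_def ix_def by (simp add: Rep_bit1_inverse)
qed

lemma bij_ix: "bij_betw ix {..<19} UNIV"
  by (rule bij_betwI[where g=idx]) (auto simp: idx_ix ix_idx idx_lt)

lemma sum19: "(\<Sum>i\<in>UNIV. f i) = (\<Sum>k<19. f (ix k))"
  using sum.reindex_bij_betw[OF bij_ix, of f] by simp

definition cv :: "real^19 \<Rightarrow> nat \<Rightarrow> real" where "cv x k = x $ ix k"

lemma bf_alt: "bf x y = (\<Sum>k<19. \<Sum>l<19. of_int (gramL k l) * cv x k * cv y l)"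
  unfolding bf_def sum19 cv_def by (simp add: idx_ix)

lemma vec_eq_cv: "(\<forall>k<19. cv x k = cv y k) \<Longrightarrow> x = y"
  unfolding cv_def by (metis vec_eq_iff ix_idx idx_lt)

definition Gl :: "int list list" where "Gl = [[-2,0,0,0,0,0,0,0,0,0,0,0,0,0,0,0,0,0,0],[0,2,-1,0,0,0,0,0,0,0,0,0,0,0,0,0,0,0,0],[0,-1,2,0,0,0,0,0,0,0,0,0,0,0,0,0,0,0,0],[0,0,0,2,-1,0,0,0,0,0,0,0,0,0,0,0,0,0,0],[0,0,0,-1,2,-1,0,0,0,0,0,0,0,0,0,0,0,0,0],[0,0,0,0,-1,2,-1,0,0,0,0,0,0,0,0,0,0,0,0],[0,0,0,0,0,-1,2,-1,0,0,0,0,0,0,0,0,0,0,0],[0,0,0,0,0,0,-1,2,-1,0,-1,0,0,0,0,0,0,0,0],[0,0,0,0,0,0,0,-1,2,-1,0,0,0,0,0,0,0,0,0],[0,0,0,0,0,0,0,0,-1,2,0,0,0,0,0,0,0,0,0],[0,0,0,0,0,0,0,-1,0,0,2,0,0,0,0,0,0,0,0],[0,0,0,0,0,0,0,0,0,0,0,2,-1,0,0,0,0,0,0],[0,0,0,0,0,0,0,0,0,0,0,-1,2,-1,0,0,0,0,0],[0,0,0,0,0,0,0,0,0,0,0,0,-1,2,-1,0,0,0,0],[0,0,0,0,0,0,0,0,0,0,0,0,0,-1,2,-1,0,0,0],[0,0,0,0,0,0,0,0,0,0,0,0,0,0,-1,2,-1,0,-1],[0,0,0,0,0,0,0,0,0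,0,0,0,0,0,0,-1,2,-1,0],[0,0,0,0,0,0,0,0,0,0,0,0,0,0,0,0,-1,2,0],[0,0,0,0,0,0,0,0,0,0,0,0,0,0,0,-1,0,0,2]]"

lemma Gl_eq: "map (\<lambda>i. map (\<lambda>j. gramL i j) [0..<19]) [0..<19] = Gl"
  unfolding Gl_def gramL_def e8_gram_def e8_edge_def by code_simp

lemma gramL_Gl: "k < 19 \<Longrightarrow> l < 19 \<Longrightarrow> gramL k l = Gl!k!l"
proof -
  assume "k < 19" "l < 19"
  then have "map (\<lambda>i. map (\<lambda>j. gramL i j) [0..<19]) [0..<19] ! k ! l = gramL k l" by simp
  then show ?thesis using Gl_eq by simp
qed


definition tr :: "int list list \<Rightarrow> int list list" where
  "tr A = map (\<lambda>i. map (\<lambda>j. A!j!i) [0..<19]) [0..<19]"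
definition mm :: "int list list \<Rightarrow> int list list \<Rightarrow> int list list" where
  "mm A B = map (\<lambda>i. map (\<lambda>j. sum_list (map (\<lambda>k. A!i!k * B!k!j) [0..<19])) [0..<19]) [0..<19]"
definition idl :: "int list list" where
  "idl = map (\<lambda>i. map (\<lambda>j. if i = j then 1 else 0) [0..<19]) [0..<19]"

lemma sl19: "sum_list (map f [0..<19]) = (\<Sum>k<19. f k)"
  by (simp add: sum_set_upt_conv_sum_list_nat[symmetric] atLeast0LessThan)

lemma mm_nth: "i < 19 \<Longrightarrow> j < 19 \<Longrightarrow> mm A B ! i ! j = (\<Sum>k<19. A!i!k * B!k!j)"
  by (simp add: mm_def sl19)
lemma tr_nth: "i < 19 \<Longrightarrow> j < 19 \<Longrightarrow> tr A ! i ! j = A!j!i"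
  by (simp add: tr_def)
lemma idl_nth: "i < 19 \<Longrightarrow> j < 19 \<Longrightarrow> idl ! i ! j = (if i = j then 1 else 0)"
  by (simp add: idl_def)

definition Hl :: "int list list" where "Hl = [[25,-12,12,0,0,0,3,-12,12,-3,6,9,0,-6,-3,9,-3,0,-6],[8,-3,4,0,0,0,1,-4,4,-1,2,3,0,-2,-1,3,-1,0,-2],[-8,4,-3,0,0,0,-1,4,-4,1,-2,-3,0,2,1,-3,1,0,2],[-6,3,-3,0,0,0,-1,3,-3,1,-1,-2,0,2,0,-2,0,1,2],[-12,6,-6,0,0,0,-2,6,-6,2,-2,-3,-1,4,1,-5,1,1,4],[-18,9,-9,0,0,0,-3,9,-9,3,-3,-5,-2,6,1,-7,2,1,6],[-24,12,-12,0,0,0,-4,12,-12,4,-4,-7,-3,8,2,-9,2,2,7],[-24,12,-12,0,0,0,-5,13,-12,4,-4,-7,-3,8,2,-9,2,2,7],[-30,15,-15,0,0,0,-5,15,-14,4,-6,-10,-2,9,3,-11,3,1,8],[-12,6,-6,0,0,0,-2,6,-6,2,-2,-4,-1,4,1,-4,1,0,3],[-18,9,-9,0,0,0,-3,9,-9,3,-3,-6,-1,5,2,-7,2,1,5],[-6,3,-3,0,1,0,-1,3,-3,1,-2,-2,0,1,1,-2,1,0,1],[6,-3,3,1,1,0,0,-3,3,0,1,2,0,-2,0,2,0,0,-2],[18,-9,9,1,1,0,2,-9,9,-1,3,6,0,-5,-1,6,-1,0,-5],[18,-9,9,1,1,0,2,-9,9,-1,3,6,0,-6,0,6,-1,0,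-5],[12,-6,6,2,0,1,1,-6,6,0,1,4,0,-5,1,4,0,0,-4],[12,-6,6,1,0,1,1,-6,6,-1,2,4,0,-4,0,4,0,0,-4],[6,-3,3,1,0,0,1,-3,3,-1,1,2,0,-2,0,2,0,0,-2],[12,-6,6,1,0,1,1,-6,6,-1,2,4,0,-4,0,4,-1,0,-3]]"
definition Nl :: "int list list" where "Nl = [[13,4,-4,-3,-6,-9,-12,-12,-15,-6,-9,-3,3,9,9,6,6,3,6],[4,0,-2,-1,-2,-3,-4,-4,-5,-2,-3,-1,1,3,3,2,2,1,2],[-4,-2,0,1,2,3,4,4,5,2,3,1,-1,-3,-3,-2,-2,-1,-2],[-3,-1,1,-2,-3,-4,-5,-7,-3,-2,-3,0,-2,-4,-4,-4,-3,-2,-3],[-6,-2,2,-3,-6,-8,-10,-14,-6,-4,-6,0,-3,-7,-7,-6,-5,-3,-5],[-9,-3,3,-4,-8,-12,-15,-21,-9,-6,-9,1,-3,-9,-9,-8,-7,-4,-7],[-12,-4,4,-5,-10,-15,-20,-28,-12,-8,-12,2,-3,-11,-11,-9,-8,-5,-8],[-12,-4,4,-7,-14,-21,-28,-40,-20,-12,-18,2,-3,-11,-11,-9,-8,-5,-8],[-15,-5,5,-3,-6,-9,-12,-20,-6,-5,-7,3,-4,-13,-13,-10,-9,-5,-9],[-6,-2,2,-2,-4,-6,-8,-12,-5,-4,-5,1,-2,-6,-6,-5,-4,-2,-4],[-9,-3,3,-3,-6,-9,-12,-18,-7,-5,-8,2,-2,-7,-7,-5,-5,-3,-5],[-3,-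1,1,0,0,1,2,2,3,1,2,-2,-5,-8,-10,-11,-8,-4,-6],[3,1,-1,-2,-3,-3,-3,-3,-4,-2,-2,-5,-8,-10,-14,-18,-12,-6,-8],[9,3,-3,-4,-7,-9,-11,-11,-13,-6,-7,-8,-10,-12,-18,-25,-16,-8,-10],[9,3,-3,-4,-7,-9,-11,-11,-13,-6,-7,-10,-14,-18,-28,-37,-24,-12,-16],[6,2,-2,-4,-6,-8,-9,-9,-10,-5,-5,-11,-18,-25,-37,-48,-32,-16,-22],[6,2,-2,-3,-5,-7,-8,-8,-9,-4,-5,-8,-12,-16,-24,-32,-22,-11,-14],[3,1,-1,-2,-3,-4,-5,-5,-5,-2,-3,-4,-6,-8,-12,-16,-11,-6,-7],[6,2,-2,-3,-5,-7,-8,-8,-9,-4,-5,-6,-8,-10,-16,-22,-14,-7,-10]]"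
definition Fl :: "int list list" where "Fl = [[6,2,-2,0,0,0,0,2,-2,0,0,-2,0,2,1,-1,0,0,1],[1,1,-1,-3,-6,-9,-3,-21,-15,-6,-9,-3,-6,0,0,-3,-3,3,-3],[0,2,0,-1,-2,-3,0,-8,-5,-2,-3,-1,-3,-1,-1,-2,-2,1,-2],[0,0,2,1,2,3,0,8,5,2,3,1,3,1,1,2,2,-1,2],[0,0,0,1,0,0,0,0,0,0,0,0,1,1,1,2,1,1,1],[0,0,0,0,1,0,0,0,0,0,0,1,1,1,1,0,0,0,0],[0,0,0,0,0,1,0,0,0,0,0,0,0,0,0,1,1,0,1],[0,0,0,0,0,0,1,-1,-1,1,0,0,0,1,1,1,0,0,0],[0,0,0,0,0,0,0,-2,-1,-2,-1,-1,-2,-2,-2,-3,-2,0,0],[0,0,0,0,0,0,0,0,1,-2,-1,-1,-2,-2,-4,-5,-2,0,-2],[0,0,0,0,0,0,0,0,0,2,0,2,4,6,4,6,6,2,0],[0,0,0,0,0,0,0,0,0,0,-2,2,2,4,0,2,4,2,-2],[0,0,0,0,0,0,0,0,0,0,0,2,4,6,4,6,8,4,0]]"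
definition Cl :: "int list list" where "Cl = [[-12,6,-6,0,0,0,-2,6,-6,2,-2,-4,0,3,1,-4,1,0,3],[-2,3,-3,0,0,-9,24,-15,-3,3,3,0,-9,6,3,0,-6,9,-3],[0,4,-2,0,0,-4,11,-8,0,1,2,1,-4,2,1,1,-3,4,-2],[0,-2,4,0,0,4,-11,8,0,-1,-2,-1,4,-2,-1,-1,3,-4,2],[0,0,0,2,-1,0,0,0,0,0,0,-1,1,0,-1,1,-1,1,0],[0,0,0,-1,2,-1,0,0,0,0,0,1,0,0,1,-1,0,0,0],[0,0,0,0,-1,2,-1,0,0,0,0,0,0,0,-1,0,1,-1,1],[0,0,0,0,0,-1,3,-2,-2,3,1,0,-1,1,0,1,-1,0,-1],[0,0,0,0,0,0,2,-2,2,-3,0,0,-1,0,1,-2,-1,2,3],[0,0,0,0,0,0,0,0,4,-5,-2,0,-1,2,-1,-2,1,2,1],[0,0,0,0,0,0,0,0,-2,4,0,0,0,4,-4,2,4,-2,-6],[0,0,0,0,0,0,0,2,0,0,-4,2,-2,6,-6,2,4,0,-6],[0,0,0,0,0,0,0,0,0,0,0,0,0,4,-4,0,6,0,-6]]"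

lemma Gsym_l: "tr Gl = Gl" unfolding tr_def Gl_def by code_simp
lemma Hinv_l: "mm Hl Hl = idl" unfolding mm_def idl_def Hl_def by code_simp
lemma Hiso_l: "mm (mm (tr Hl) Gl) Hl = Gl" unfolding mm_def tr_def Hl_def Gl_def by code_simp
lemma Nrel_l: "mm Nl Gl = map (\<lambda>i. map (\<lambda>j. - Hl!i!j - (if i = j then 1 else 0)) [0..<19]) [0..<19]"
  unfolding mm_def Nl_def Gl_def Hl_def by code_simp
lemma Ffix_l: "map (\<lambda>r. map (\<lambda>k. sum_list (map (\<lambda>j. Hl!k!j * r!j) [0..<19])) [0..<19]) Fl = Fl"
  unfolding Hl_def Fl_def by code_simp
lemma FC_l: "map (\<lambda>r. map (\<lambda>k. sum_list (map (\<lambda>l. Gl!k!l * r!l) [0..<19])) [0..<19]) Fl = Cl"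
  unfolding Gl_def Fl_def Cl_def by code_simp
lemma Fl_len: "length Fl = 13" unfolding Fl_def by simp
lemma Fl_rowlen: "r \<in> set Fl \<Longrightarrow> length r = 19" unfolding Fl_def by auto

lemma gramL_sym: "k < 19 \<Longrightarrow> l < 19 \<Longrightarrow> gramL k l = gramL l k"
  using Gsym_l by (metis gramL_Gl tr_nth)

lemma Hinv: "i < 19 \<Longrightarrow> j < 19 \<Longrightarrow> (\<Sum>k<19. Hl!i!k * Hl!k!j) = (if i = j then 1 else 0)"
  using Hinv_l by (metis mm_nth idl_nth)

lemma Hiso: "a < 19 \<Longrightarrow> b < 19 \<Longrightarrow> (\<Sum>k<19. \<Sum>l<19. Hl!k!a * Gl!k!l * Hl!l!b) = Gl!a!b"
proof -
  assume ab: "a < 19" "b < 19"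
  have "Gl!a!b = mm (mm (tr Hl) Gl) Hl ! a ! b" using Hiso_l by simp
  also have "\<dots> = (\<Sum>l<19. (\<Sum>k<19. Hl!k!a * Gl!k!l) * Hl!l!b)"
    using ab by (simp add: mm_nth tr_nth)
  also have "\<dots> = (\<Sum>l<19. \<Sum>k<19. Hl!k!a * Gl!k!l * Hl!l!b)"
    by (simp add: sum_distrib_right)
  also have "\<dots> = (\<Sum>k<19. \<Sum>l<19. Hl!k!a * Gl!k!l * Hl!l!b)"
    by (rule sum.swap)
  finally show ?thesis by simp
qed

lemma Nrel: "i < 19 \<Longrightarrow> j < 19 \<Longrightarrow> (\<Sum>b<19. Nl!i!b * Gl!j!b) = - Hl!i!j - (if i = j then 1 else 0)"
proof -
  assume ij: "i < 19" "j < 19"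
  have "(\<Sum>b<19. Nl!i!b * Gl!j!b) = (\<Sum>b<19. Nl!i!b * Gl!b!j)"
    by (rule sum.cong) (auto simp: gramL_Gl[symmetric] ij intro: gramL_sym)
  also have "\<dots> = mm Nl Gl ! i ! j" using ij by (simp add: mm_nth)
  also have "\<dots> = - Hl!i!j - (if i = j then 1 else 0)" using ij by (simp add: Nrel_l)
  finally show ?thesis .
qed

lemma Ffix: "r \<in> set Fl \<Longrightarrow> k < 19 \<Longrightarrow> (\<Sum>j<19. Hl!k!j * r!j) = r!k"
proof -
  assume r: "r \<in> set Fl" and k: "k < 19"
  obtain m where m: "m < length Fl" "r = Fl!m" using r by (metis in_set_conv_nth)
  have "map (\<lambda>r. map (\<lambda>k. sum_list (map (\<lambda>j. Hl!k!j * r!j) [0..<19])) [0..<19]) Fl ! m ! k = Fl!m!k"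
    using Ffix_l by simp
  then show ?thesis using m k by (simp add: sl19)
qed

lemma FC: "i < 13 \<Longrightarrow> k < 19 \<Longrightarrow> (\<Sum>l<19. Gl!k!l * Fl!i!l) = Cl!i!k"
proof -
  assume i: "i < 13" and k: "k < 19"
  have "map (\<lambda>r. map (\<lambda>k. sum_list (map (\<lambda>l. Gl!k!l * r!l) [0..<19])) [0..<19]) Fl ! i ! k = Cl!i!k"
    using FC_l by simp
  then show ?thesis using i k Fl_len by (simp add: sl19)
qed


definition mvr :: "int list list \<Rightarrow> (nat \<Rightarrow> real) \<Rightarrow> nat \<Rightarrow> real" where
  "mvr A u i = (\<Sum>j<19. of_int (A!i!j) * u j)"

definition gmap :: "real^19 \<Rightarrow> real^19" where
  "gmap x = (\<chi> i. - mvr Hl (cv x) (idx i))"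

lemma cv_gmap: "k < 19 \<Longrightarrow> cv (gmap x) k = - mvr Hl (cv x) k"
  by (simp add: gmap_def cv_def idx_ix)

lemma cv_add: "cv (x + y) k = cv x k + cv y k" by (simp add: cv_def)
lemma cv_scale: "cv (c *\<^sub>R x) k = c * cv x k" by (simp add: cv_def)
lemma cv_minus: "cv (- x) k = - cv x k" by (simp add: cv_def)
lemma cv_diff: "cv (x - y) k = cv x k - cv y k" by (simp add: cv_def)

lemma linear_gmap: "linear gmap"
proof (rule linearI)
  fix x y :: "real^19" and c :: real
  show "gmap (x + y) = gmap x + gmap y"
    by (rule vec_eq_cv) (simp add: cv_gmap cv_add mvr_def algebra_simps sum.distrib)
  show "gmap (c *\<^sub>R x) = c *\<^sub>R gmap x"
    by (rule vec_eq_cv) (simp add: cv_gmap cv_scale mvr_def algebra_simps sum_distrib_left)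
qed

lemma gmap_gmap: "gmap (gmap x) = x"
proof (rule vec_eq_cv, intro allI impI)
  fix k :: nat assume k: "k < 19"
  have "cv (gmap (gmap x)) k = (\<Sum>j<19. of_int (Hl!k!j) * mvr Hl (cv x) j)"
    using k by (simp add: cv_gmap mvr_def sum_negf)
  also have "\<dots> = (\<Sum>j<19. \<Sum>l<19. of_int (Hl!k!j * Hl!j!l) * cv x l)"
    by (simp add: mvr_def sum_distrib_left mult.assoc)
  also have "\<dots> = (\<Sum>l<19. \<Sum>j<19. of_int (Hl!k!j * Hl!j!l) * cv x l)"
    by (rule sum.swap)
  also have "\<dots> = (\<Sum>l<19. of_int (\<Sum>j<19. Hl!k!j * Hl!j!l) * cv x l)"
    by (simp add: sum_distrib_right)
  also have "\<dots> = (\<Sum>l<19. (if k = l then 1 else 0) * cv x l)"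
    by (rule sum.cong) (simp_all add: Hinv k)
  also have "\<dots> = (\<Sum>l<19. if l = k then cv x l else 0)"
    by (intro sum.cong refl) auto
  also have "\<dots> = cv x k" using k by (simp add: sum.delta')
  finally show "cv (gmap (gmap x)) k = cv x k" .
qed

lemma inj_gmap: "inj gmap" by (metis gmap_gmap injI)

lemma quad:
  fixes u w :: "nat \<Rightarrow> real"
  shows "(\<Sum>k<19. \<Sum>l<19. of_int (Gl!k!l) * mvr Hl u k * mvr Hl w l)
       = (\<Sum>a<19. \<Sum>b<19. of_int (Gl!a!b) * u a * w b)"
proof -
  have "(\<Sum>k<19. \<Sum>l<19. of_int (Gl!k!l) * mvr Hl u k * mvr Hl w l)
     = (\<Sum>k<19. \<Sum>l<19. \<Sum>a<19. \<Sum>b<19. of_int (Hl!k!a * Gl!k!l * Hl!l!b) * u a * w b)"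
    by (simp add: mvr_def sum_distrib_left sum_distrib_right mult_ac)
  also have "\<dots> = (\<Sum>k<19. \<Sum>a<19. \<Sum>l<19. \<Sum>b<19. of_int (Hl!k!a * Gl!k!l * Hl!l!b) * u a * w b)"
    by (rule sum.cong[OF refl], rule sum.swap)
  also have "\<dots> = (\<Sum>a<19. \<Sum>k<19. \<Sum>l<19. \<Sum>b<19. of_int (Hl!k!a * Gl!k!l * Hl!l!b) * u a * w b)"
    by (rule sum.swap)
  also have "\<dots> = (\<Sum>a<19. \<Sum>k<19. \<Sum>b<19. \<Sum>l<19. of_int (Hl!k!a * Gl!k!l * Hl!l!b) * u a * w b)"
    by (rule sum.cong[OF refl], rule sum.cong[OF refl], rule sum.swap)
  also have "\<dots> = (\<Sum>a<19. \<Sum>b<19. \<Sum>k<19. \<Sum>l<19. of_int (Hl!k!a * Gl!k!l * Hl!l!b) * u a * w b)"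
    by (rule sum.cong[OF refl], rule sum.swap)
  also have "\<dots> = (\<Sum>a<19. \<Sum>b<19. of_int (\<Sum>k<19. \<Sum>l<19. Hl!k!a * Gl!k!l * Hl!l!b) * u a * w b)"
    by (simp add: sum_distrib_right)
  also have "\<dots> = (\<Sum>a<19. \<Sum>b<19. of_int (Gl!a!b) * u a * w b)"
    by (intro sum.cong refl) (simp add: Hiso)
  finally show ?thesis .
qed

lemma bf_Gl: "bf x y = (\<Sum>k<19. \<Sum>l<19. of_int (Gl!k!l) * cv x k * cv y l)"
  unfolding bf_alt by (intro sum.cong refl) (simp add: gramL_Gl)

lemma bf_gmap: "bf (gmap x) (gmap y) = bf x y"
proof -
  have "bf (gmap x) (gmap y) = (\<Sum>k<19. \<Sum>l<19. of_int (Gl!k!l) * mvr Hl (cv x) k * mvr Hl (cv y) l)"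
    unfolding bf_Gl by (intro sum.cong refl) (simp add: cv_gmap)
  then show ?thesis by (simp add: quad bf_Gl)
qed

lemma latL_cv: "x \<in> latL \<longleftrightarrow> (\<forall>k<19. cv x k \<in> \<int>)"
proof
  assume "x \<in> latL" then show "\<forall>k<19. cv x k \<in> \<int>" unfolding latL_def cv_def by auto
next
  assume h: "\<forall>k<19. cv x k \<in> \<int>"
  have "x $ i \<in> \<int>" for i
  proof -
    have "cv x (idx i) \<in> \<int>" using h idx_lt by blast
    then show ?thesis unfolding cv_def ix_idx .
  qed
  then show "x \<in> latL" unfolding latL_def by auto
qed

lemma gmap_latL: "x \<in> latL \<Longrightarrow> gmap x \<in> latL"
  unfolding latL_cv by (auto simp: cv_gmap mvr_def intro!: Ints_sum Ints_mult Ints_minus)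

lemma gmap_img_latL: "gmap ` latL = latL"
proof
  show "gmap ` latL \<subseteq> latL" using gmap_latL by blast
  show "latL \<subseteq> gmap ` latL"
  proof
    fix y assume "y \<in> latL"
    then show "y \<in> gmap ` latL" using gmap_latL gmap_gmap by (metis image_eqI)
  qed
qed

lemma autL_gmap: "autL gmap"
  unfolding autL_def using linear_gmap gmap_img_latL bf_gmap by blast

definition evec :: "nat \<Rightarrow> real^19" where "evec b = (\<chi> i. if idx i = b then 1 else 0)"

lemma cv_evec: "k < 19 \<Longrightarrow> cv (evec b) k = (if k = b then 1 else 0)"
  by (simp add: evec_def cv_def idx_ix)

lemma evec_latL: "evec b \<in> latL"
  unfolding latL_def evec_def by auto

lemma bf_evec: "b < 19 \<Longrightarrow> bf x (evec b) = (\<Sum>k<19. of_int (Gl!k!b) * cv x k)"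
proof -
  assume b: "b < 19"
  have "bf x (evec b) = (\<Sum>k<19. \<Sum>l<19. of_int (Gl!k!l) * cv x k * (if l = b then 1 else 0))"
    unfolding bf_Gl by (intro sum.cong refl) (simp add: cv_evec)
  also have "\<dots> = (\<Sum>k<19. of_int (Gl!k!b) * cv x k)"
    by (intro sum.cong refl) (simp add: if_distrib sum.delta' b cong: if_cong)
  finally show ?thesis .
qed

lemma Z3_gmap: "Z3_direct gmap"
  unfolding Z3_direct_def
proof (intro ballI impI)
  fix x assume "x \<in> dualL"
  then have s: "\<And>b. b < 19 \<Longrightarrow> (\<Sum>k<19. of_int (Gl!k!b) * cv x k) \<in> \<int>"
  proof -
    fix b :: nat assume b: "b < 19"
    have "bf x (evec b) \<in> \<int>" using \<open>x \<in> dualL\<close> evec_latL unfolding dualL_def by blast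
    then show "(\<Sum>k<19. of_int (Gl!k!b) * cv x k) \<in> \<int>" using bf_evec[OF b] by simp
  qed
  show "gmap x - x \<in> latL"
    unfolding latL_cv
  proof (intro allI impI)
    fix i :: nat assume i: "i < 19"
    have "(\<Sum>b<19. of_int (Nl!i!b) * (\<Sum>k<19. of_int (Gl!k!b) * cv x k))
        = (\<Sum>b<19. \<Sum>k<19. of_int (Nl!i!b * Gl!k!b) * cv x k)"
      by (simp add: sum_distrib_left mult.assoc)
    also have "\<dots> = (\<Sum>k<19. \<Sum>b<19. of_int (Nl!i!b * Gl!k!b) * cv x k)"
      by (rule sum.swap)
    also have "\<dots> = (\<Sum>k<19. of_int (\<Sum>b<19. Nl!i!b * Gl!k!b) * cv x k)"
      by (simp add: sum_distrib_right)
    also have "\<dots> = (\<Sum>k<19. of_int (- Hl!i!k - (if i = k then 1 else 0)) * cv x k)"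
      by (intro sum.cong refl) (simp add: Nrel i)
    also have "\<dots> = (\<Sum>k<19. - (of_int (Hl!i!k) * cv x k) - (if k = i then cv x k else 0))"
      by (intro sum.cong refl) (auto simp: algebra_simps)
    also have "\<dots> = - mvr Hl (cv x) i - cv x i"
      using i by (simp add: mvr_def sum_subtractf sum_negf sum.delta')
    also have "\<dots> = cv (gmap x - x) i" using i by (simp add: cv_diff cv_gmap)
    finally have eq: "cv (gmap x - x) i = (\<Sum>b<19. of_int (Nl!i!b) * (\<Sum>k<19. of_int (Gl!k!b) * cv x k))" ..
    show "cv (gmap x - x) i \<in> \<int>"
      unfolding eq
    proof (rule Ints_sum)
      fix b assume "b \<in> {..<(19::nat)}"
      then have "b < 19" by simp
      then show "of_int (Nl!i!b) * (\<Sum>k<19. of_int (Gl!k!b) * cv x k) \<in> \<int>"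
        using s Ints_mult Ints_of_int by blast
    qed
  qed
qed


lemma sum19e: "(\<Sum>k<(19::nat). f k) = f 0 + f 1 + f 2 + f 3 + f 4 + f 5 + f 6 + f 7 + f 8 + f 9 + f 10 + f 11 + f 12 + f 13 + f 14 + f 15 + f 16 + f 17 + f 18"
  by (simp add: eval_nat_numeral sum.lessThan_Suc add.assoc)

lemma KL:
  fixes u :: "nat \<Rightarrow> real"
  assumes h: "\<forall>i<13. (\<Sum>k<19. u k * of_int (Cl!i!k)) = 0"
    and int: "\<forall>k<19. u k \<in> \<int>"
  shows "(\<Sum>k<19. u k * (\<Sum>l<19. of_int (Gl!k!l) * u l)) \<noteq> 2 \<and> (\<Sum>k<19. u k * (\<Sum>l<19. of_int (Gl!k!l) * u l)) \<noteq> 6"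
proof -
  have E0: "(-12) * u 0 + (6) * u 1 + (-6) * u 2 + (-2) * u 6 + (6) * u 7 + (-6) * u 8 + (2) * u 9 + (-2) * u 10 + (-4) * u 11 + (3) * u 13 + (1) * u 14 + (-4) * u 15 + (1) * u 16 + (3) * u 18 = 0"
    using h[rule_format, of 0] unfolding sum19e by (simp add: Cl_def)
  have E1: "(-2) * u 0 + (3) * u 1 + (-3) * u 2 + (-9) * u 5 + (24) * u 6 + (-15) * u 7 + (-3) * u 8 + (3) * u 9 + (3) * u 10 + (-9) * u 12 + (6) * u 13 + (3) * u 14 + (-6) * u 16 + (9) * u 17 + (-3) * u 18 = 0"
    using h[rule_format, of 1] unfolding sum19e by (simp add: Cl_def)
  have E2: "(4) * u 1 + (-2) * u 2 + (-4) * u 5 + (11) * u 6 + (-8) * u 7 + (1) * u 9 + (2) * u 10 + (1) * u 11 + (-4) * u 12 + (2) * u 13 + (1) * u 14 + (1) * u 15 + (-3) * u 16 + (4) * u 17 + (-2) * u 18 = 0"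
    using h[rule_format, of 2] unfolding sum19e by (simp add: Cl_def)
  have E3: "(-2) * u 1 + (4) * u 2 + (4) * u 5 + (-11) * u 6 + (8) * u 7 + (-1) * u 9 + (-2) * u 10 + (-1) * u 11 + (4) * u 12 + (-2) * u 13 + (-1) * u 14 + (-1) * u 15 + (3) * u 16 + (-4) * u 17 + (2) * u 18 = 0"
    using h[rule_format, of 3] unfolding sum19e by (simp add: Cl_def)
  have E4: "(2) * u 3 + (-1) * u 4 + (-1) * u 11 + (1) * u 12 + (-1) * u 14 + (1) * u 15 + (-1) * u 16 + (1) * u 17 = 0"
    using h[rule_format, of 4] unfolding sum19e by (simp add: Cl_def)
  have E5: "(-1) * u 3 + (2) * u 4 + (-1) * u 5 + (1) * u 11 + (1) * u 14 + (-1) * u 15 = 0"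
    using h[rule_format, of 5] unfolding sum19e by (simp add: Cl_def)
  have E6: "(-1) * u 4 + (2) * u 5 + (-1) * u 6 + (-1) * u 14 + (1) * u 16 + (-1) * u 17 + (1) * u 18 = 0"
    using h[rule_format, of 6] unfolding sum19e by (simp add: Cl_def)
  have E7: "(-1) * u 5 + (3) * u 6 + (-2) * u 7 + (-2) * u 8 + (3) * u 9 + (1) * u 10 + (-1) * u 12 + (1) * u 13 + (1) * u 15 + (-1) * u 16 + (-1) * u 18 = 0"
    using h[rule_format, of 7] unfolding sum19e by (simp add: Cl_def)
  have E8: "(2) * u 6 + (-2) * u 7 + (2) * u 8 + (-3) * u 9 + (-1) * u 12 + (1) * u 14 + (-2) * u 15 + (-1) * u 16 + (2) * u 17 + (3) * u 18 = 0"
    using h[rule_format, of 8] unfolding sum19e by (simp add: Cl_def)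
  have E9: "(4) * u 8 + (-5) * u 9 + (-2) * u 10 + (-1) * u 12 + (2) * u 13 + (-1) * u 14 + (-2) * u 15 + (1) * u 16 + (2) * u 17 + (1) * u 18 = 0"
    using h[rule_format, of 9] unfolding sum19e by (simp add: Cl_def)
  have E10: "(-2) * u 8 + (4) * u 9 + (4) * u 13 + (-4) * u 14 + (2) * u 15 + (4) * u 16 + (-2) * u 17 + (-6) * u 18 = 0"
    using h[rule_format, of 10] unfolding sum19e by (simp add: Cl_def)
  have E11: "(2) * u 7 + (-4) * u 10 + (2) * u 11 + (-2) * u 12 + (6) * u 13 + (-6) * u 14 + (2) * u 15 + (4) * u 16 + (-6) * u 18 = 0"
    using h[rule_format, of 11] unfolding sum19e by (simp add: Cl_def)
  have E12: "(4) * u 13 + (-4) * u 14 + (6) * u 16 + (-6) * u 18 = 0"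
    using h[rule_format, of 12] unfolding sum19e by (simp add: Cl_def)
  have L5: "2 * (u 5 - ((3) * u 1 + (-1) * u 3 + (2) * u 10 + (-1) * u 18)) = (-12) * ((-12) * u 0 + (6) * u 1 + (-6) * u 2 + (-2) * u 6 + (6) * u 7 + (-6) * u 8 + (2) * u 9 + (-2) * u 10 + (-4) * u 11 + (3) * u 13 + (1) * u 14 + (-4) * u 15 + (1) * u 16 + (3) * u 18) + (72) * ((-2) * u 0 + (3) * u 1 + (-3) * u 2 + (-9) * u 5 + (24) * u 6 + (-15) * u 7 + (-3) * u 8 + (3) * u 9 + (3) * u 10 + (-9) * u 12 + (6) * u 13 + (3) * u 14 + (-6) * u 16 + (9) * u 17 + (-3) * u 18) + (-26) * ((4) * u 1 + (-2) * u 2 + (-4) * u 5 + (11) * u 6 + (-8) * u 7 + (1) * u 9 + (2) * u 10 + (1) * u 11 + (-4) * u 12 + (2) * u 13 + (1) * u 14 + (1) * u 15 + (-3) * u 16 + (4) * u 17 + (-2) * u 18) + (23) * ((-2) * u 1 + (4) * u 2 + (4) * u 5 + (-11) * u 6 + (8) * u 7 + (-1) * u 9 + (-2) * u 10 + (-1) * u 11 + (4) * u 12 + (-2) * u 13 + (-1) * u 14 + (-1) * u 15 + (3) * u 16 + (-4) * u 17 + (2) * u 18) + (167) * ((2) * u 3 + (-1) * u 4 + (-1) * u 11 + (1) * u 12 + (-1) * u 14 + (1) * u 15 + (-1) * u 16 + (1) * u 17) + (332) * ((-1) * u 3 + (2) * u 4 + (-1) * u 5 + (1) * u 11 + (1)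 * u 14 + (-1) * u 15) + (497) * ((-1) * u 4 + (2) * u 5 + (-1) * u 6 + (-1) * u 14 + (1) * u 16 + (-1) * u 17 + (1) * u 18) + (208) * ((-1) * u 5 + (3) * u 6 + (-2) * u 7 + (-2) * u 8 + (3) * u 9 + (1) * u 10 + (-1) * u 12 + (1) * u 13 + (1) * u 15 + (-1) * u 16 + (-1) * u 18) + (-670) * ((2) * u 6 + (-2) * u 7 + (2) * u 8 + (-3) * u 9 + (-1) * u 12 + (1) * u 14 + (-2) * u 15 + (-1) * u 16 + (2) * u 17 + (3) * u 18) + (341) * ((4) * u 8 + (-5) * u 9 + (-2) * u 10 + (-1) * u 12 + (2) * u 13 + (-1) * u 14 + (-2) * u 15 + (1) * u 16 + (2) * u 17 + (1) * u 18) + (-268) * ((-2) * u 8 + (4) * u 9 + (4) * u 13 + (-4) * u 14 + (2) * u 15 + (4) * u 16 + (-2) * u 17 + (-6) * u 18) + (-82) * ((2) * u 7 + (-4) * u 10 + (2) * u 11 + (-2) * u 12 + (6) * u 13 + (-6) * u 14 + (2) * u 15 + (4) * u 16 + (-6) * u 18) + (94) * ((4) * u 13 + (-4) * u 14 + (6) * u 16 + (-6) * u 18)" by algebra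
  have P5: "u 5 = (3) * u 1 + (-1) * u 3 + (2) * u 10 + (-1) * u 18" using L5[unfolded E0 E1 E2 E3 E4 E5 E6 E7 E8 E9 E10 E11 E12] by simp
  have L0: "4 * (u 0 - ((3) * u 1)) = (-2) * ((-2) * u 0 + (3) * u 1 + (-3) * u 2 + (-9) * u 5 + (24) * u 6 + (-15) * u 7 + (-3) * u 8 + (3) * u 9 + (3) * u 10 + (-9) * u 12 + (6) * u 13 + (3) * u 14 + (-6) * u 16 + (9) * u 17 + (-3) * u 18) + (-3) * ((4) * u 1 + (-2) * u 2 + (-4) * u 5 + (11) * u 6 + (-8) * u 7 + (1) * u 9 + (2) * u 10 + (1) * u 11 + (-4) * u 12 + (2) * u 13 + (1) * u 14 + (1) * u 15 + (-3) * u 16 + (4) * u 17 + (-2) * u 18) + (-3) * ((-2) * u 1 + (4) * u 2 + (4) * u 5 + (-11) * u 6 + (8) * u 7 + (-1) * u 9 + (-2) * u 10 + (-1) * u 11 + (4) * u 12 + (-2) * u 13 + (-1) * u 14 + (-1) * u 15 + (3) * u 16 + (-4) * u 17 + (2) * u 18) + (-6) * ((2) * u 3 + (-1) * u 4 + (-1) * u 11 + (1) * u 12 + (-1) * u 14 + (1) * u 15 + (-1) * u 16 + (1) * u 17) + (-12) * ((-1) * u 3 + (2) * u 4 + (-1) * u 5 + (1) * u 11 + (1) * u 14 + (-1) * u 15) + (-18) * ((-1) * u 4 + (2) * u 5 + (-1) * u 6 + (-1) * u 14 + (1) * u 16 + (-1) * u 17 + (1) * u 18) + (-6) * ((-1)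 * u 5 + (3) * u 6 + (-2) * u 7 + (-2) * u 8 + (3) * u 9 + (1) * u 10 + (-1) * u 12 + (1) * u 13 + (1) * u 15 + (-1) * u 16 + (-1) * u 18) + (24) * ((2) * u 6 + (-2) * u 7 + (2) * u 8 + (-3) * u 9 + (-1) * u 12 + (1) * u 14 + (-2) * u 15 + (-1) * u 16 + (2) * u 17 + (3) * u 18) + (-12) * ((4) * u 8 + (-5) * u 9 + (-2) * u 10 + (-1) * u 12 + (2) * u 13 + (-1) * u 14 + (-2) * u 15 + (1) * u 16 + (2) * u 17 + (1) * u 18) + (9) * ((-2) * u 8 + (4) * u 9 + (4) * u 13 + (-4) * u 14 + (2) * u 15 + (4) * u 16 + (-2) * u 17 + (-6) * u 18) + (3) * ((2) * u 7 + (-4) * u 10 + (2) * u 11 + (-2) * u 12 + (6) * u 13 + (-6) * u 14 + (2) * u 15 + (4) * u 16 + (-6) * u 18) + (-3) * ((4) * u 13 + (-4) * u 14 + (6) * u 16 + (-6) * u 18)" by algebra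
  have P0: "u 0 = (3) * u 1" using L0[unfolded E0 E1 E2 E3 E4 E5 E6 E7 E8 E9 E10 E11 E12] by simp
  have L15: "1 * (u 15 - ((-1) * u 3 + (-1) * u 9 + (1) * u 10 + (1) * u 18)) = (-7) * ((-12) * u 0 + (6) * u 1 + (-6) * u 2 + (-2) * u 6 + (6) * u 7 + (-6) * u 8 + (2) * u 9 + (-2) * u 10 + (-4) * u 11 + (3) * u 13 + (1) * u 14 + (-4) * u 15 + (1) * u 16 + (3) * u 18) + (42) * ((-2) * u 0 + (3) * u 1 + (-3) * u 2 + (-9) * u 5 + (24) * u 6 + (-15) * u 7 + (-3) * u 8 + (3) * u 9 + (3) * u 10 + (-9) * u 12 + (6) * u 13 + (3) * u 14 + (-6) * u 16 + (9) * u 17 + (-3) * u 18) + (-14) * ((4) * u 1 + (-2) * u 2 + (-4) * u 5 + (11) * u 6 + (-8) * u 7 + (1) * u 9 + (2) * u 10 + (1) * u 11 + (-4) * u 12 + (2) * u 13 + (1) * u 14 + (1) * u 15 + (-3) * u 16 + (4) * u 17 + (-2) * u 18) + (14) * ((-2) * u 1 + (4) * u 2 + (4) * u 5 + (-11) * u 6 + (8) * u 7 + (-1) * u 9 + (-2) * u 10 + (-1) * u 11 + (4) * u 12 + (-2) * u 13 + (-1) * u 14 + (-1) * u 15 + (3) * u 16 + (-4) * u 17 + (2) * u 18) + (99) * ((2) * u 3 + (-1) * u 4 + (-1) * u 11 + (1) * u 12 + (-1) * u 14 + (1) * u 15 + (-1) * u 16 + (1) * u 17) + (197) * ((-1) *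 u 3 + (2) * u 4 + (-1) * u 5 + (1) * u 11 + (1) * u 14 + (-1) * u 15) + (295) * ((-1) * u 4 + (2) * u 5 + (-1) * u 6 + (-1) * u 14 + (1) * u 16 + (-1) * u 17 + (1) * u 18) + (127) * ((-1) * u 5 + (3) * u 6 + (-2) * u 7 + (-2) * u 8 + (3) * u 9 + (1) * u 10 + (-1) * u 12 + (1) * u 13 + (1) * u 15 + (-1) * u 16 + (-1) * u 18) + (-400) * ((2) * u 6 + (-2) * u 7 + (2) * u 8 + (-3) * u 9 + (-1) * u 12 + (1) * u 14 + (-2) * u 15 + (-1) * u 16 + (2) * u 17 + (3) * u 18) + (204) * ((4) * u 8 + (-5) * u 9 + (-2) * u 10 + (-1) * u 12 + (2) * u 13 + (-1) * u 14 + (-2) * u 15 + (1) * u 16 + (2) * u 17 + (1) * u 18) + (-161) * ((-2) * u 8 + (4) * u 9 + (4) * u 13 + (-4) * u 14 + (2) * u 15 + (4) * u 16 + (-2) * u 17 + (-6) * u 18) + (-49) * ((2) * u 7 + (-4) * u 10 + (2) * u 11 + (-2) * u 12 + (6) * u 13 + (-6) * u 14 + (2) * u 15 + (4) * u 16 + (-6) * u 18) + (57) * ((4) * u 13 + (-4) * u 14 + (6) * u 16 + (-6) * u 18)" by algebra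
  have P15: "u 15 = (-1) * u 3 + (-1) * u 9 + (1) * u 10 + (1) * u 18" using L15[unfolded E0 E1 E2 E3 E4 E5 E6 E7 E8 E9 E10 E11 E12] by simp
  have L16: "2 * (u 16 - ((1) * u 18)) = (-4) * ((-12) * u 0 + (6) * u 1 + (-6) * u 2 + (-2) * u 6 + (6) * u 7 + (-6) * u 8 + (2) * u 9 + (-2) * u 10 + (-4) * u 11 + (3) * u 13 + (1) * u 14 + (-4) * u 15 + (1) * u 16 + (3) * u 18) + (24) * ((-2) * u 0 + (3) * u 1 + (-3) * u 2 + (-9) * u 5 + (24) * u 6 + (-15) * u 7 + (-3) * u 8 + (3) * u 9 + (3) * u 10 + (-9) * u 12 + (6) * u 13 + (3) * u 14 + (-6) * u 16 + (9) * u 17 + (-3) * u 18) + (-8) * ((4) * u 1 + (-2) * u 2 + (-4) * u 5 + (11) * u 6 + (-8) * u 7 + (1) * u 9 + (2) * u 10 + (1) * u 11 + (-4) * u 12 + (2) * u 13 + (1) * u 14 + (1) * u 15 + (-3) * u 16 + (4) * u 17 + (-2) * u 18) + (8) * ((-2) * u 1 + (4) * u 2 + (4) * u 5 + (-11) * u 6 + (8) * u 7 + (-1) * u 9 + (-2) * u 10 + (-1) * u 11 + (4) * u 12 + (-2) * u 13 + (-1) * u 14 + (-1) * u 15 + (3) * u 16 + (-4) * u 17 + (2) * u 18) + (56) * ((2) * u 3 + (-1) * u 4 + (-1) * u 11 + (1) * u 12 + (-1) * u 14 + (1) * u 15 + (-1) * u 16 + (1) * u 17) + (112) * ((-1) *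 u 3 + (2) * u 4 + (-1) * u 5 + (1) * u 11 + (1) * u 14 + (-1) * u 15) + (168) * ((-1) * u 4 + (2) * u 5 + (-1) * u 6 + (-1) * u 14 + (1) * u 16 + (-1) * u 17 + (1) * u 18) + (72) * ((-1) * u 5 + (3) * u 6 + (-2) * u 7 + (-2) * u 8 + (3) * u 9 + (1) * u 10 + (-1) * u 12 + (1) * u 13 + (1) * u 15 + (-1) * u 16 + (-1) * u 18) + (-228) * ((2) * u 6 + (-2) * u 7 + (2) * u 8 + (-3) * u 9 + (-1) * u 12 + (1) * u 14 + (-2) * u 15 + (-1) * u 16 + (2) * u 17 + (3) * u 18) + (116) * ((4) * u 8 + (-5) * u 9 + (-2) * u 10 + (-1) * u 12 + (2) * u 13 + (-1) * u 14 + (-2) * u 15 + (1) * u 16 + (2) * u 17 + (1) * u 18) + (-92) * ((-2) * u 8 + (4) * u 9 + (4) * u 13 + (-4) * u 14 + (2) * u 15 + (4) * u 16 + (-2) * u 17 + (-6) * u 18) + (-28) * ((2) * u 7 + (-4) * u 10 + (2) * u 11 + (-2) * u 12 + (6) * u 13 + (-6) * u 14 + (2) * u 15 + (4) * u 16 + (-6) * u 18) + (33) * ((4) * u 13 + (-4) * u 14 + (6) * u 16 + (-6) * u 18)" by algebra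
  have P16: "u 16 = (1) * u 18" using L16[unfolded E0 E1 E2 E3 E4 E5 E6 E7 E8 E9 E10 E11 E12] by simp
  have L14: "2 * (u 14 - ((-1) * u 9 + (1) * u 12)) = (-16) * ((-12) * u 0 + (6) * u 1 + (-6) * u 2 + (-2) * u 6 + (6) * u 7 + (-6) * u 8 + (2) * u 9 + (-2) * u 10 + (-4) * u 11 + (3) * u 13 + (1) * u 14 + (-4) * u 15 + (1) * u 16 + (3) * u 18) + (96) * ((-2) * u 0 + (3) * u 1 + (-3) * u 2 + (-9) * u 5 + (24) * u 6 + (-15) * u 7 + (-3) * u 8 + (3) * u 9 + (3) * u 10 + (-9) * u 12 + (6) * u 13 + (3) * u 14 + (-6) * u 16 + (9) * u 17 + (-3) * u 18) + (-32) * ((4) * u 1 + (-2) * u 2 + (-4) * u 5 + (11) * u 6 + (-8) * u 7 + (1) * u 9 + (2) * u 10 + (1) * u 11 + (-4) * u 12 + (2) * u 13 + (1) * u 14 + (1) * u 15 + (-3) * u 16 + (4) * u 17 + (-2) * u 18) + (32) * ((-2) * u 1 + (4) * u 2 + (4) * u 5 + (-11) * u 6 + (8) * u 7 + (-1) * u 9 + (-2) * u 10 + (-1) * u 11 + (4) * u 12 + (-2) * u 13 + (-1) * u 14 + (-1) * u 15 + (3) * u 16 + (-4) * u 17 + (2) * u 18) + (228) * ((2) * u 3 + (-1) * u 4 + (-1) * u 11 + (1) * u 12 + (-1) * u 14 + (1) * u 15 + (-1) * u 16 + (1) * u 17) + (456) * ((-1) * u 3 + (2) * u 4 + (-1) *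 u 5 + (1) * u 11 + (1) * u 14 + (-1) * u 15) + (684) * ((-1) * u 4 + (2) * u 5 + (-1) * u 6 + (-1) * u 14 + (1) * u 16 + (-1) * u 17 + (1) * u 18) + (304) * ((-1) * u 5 + (3) * u 6 + (-2) * u 7 + (-2) * u 8 + (3) * u 9 + (1) * u 10 + (-1) * u 12 + (1) * u 13 + (1) * u 15 + (-1) * u 16 + (-1) * u 18) + (-930) * ((2) * u 6 + (-2) * u 7 + (2) * u 8 + (-3) * u 9 + (-1) * u 12 + (1) * u 14 + (-2) * u 15 + (-1) * u 16 + (2) * u 17 + (3) * u 18) + (476) * ((4) * u 8 + (-5) * u 9 + (-2) * u 10 + (-1) * u 12 + (2) * u 13 + (-1) * u 14 + (-2) * u 15 + (1) * u 16 + (2) * u 17 + (1) * u 18) + (-378) * ((-2) * u 8 + (4) * u 9 + (4) * u 13 + (-4) * u 14 + (2) * u 15 + (4) * u 16 + (-2) * u 17 + (-6) * u 18) + (-114) * ((2) * u 7 + (-4) * u 10 + (2) * u 11 + (-2) * u 12 + (6) * u 13 + (-6) * u 14 + (2) * u 15 + (4) * u 16 + (-6) * u 18) + (135) * ((4) * u 13 + (-4) * u 14 + (6) * u 16 + (-6) * u 18)" by algebra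
  have P14: "u 14 = (-1) * u 9 + (1) * u 12" using L14[unfolded E0 E1 E2 E3 E4 E5 E6 E7 E8 E9 E10 E11 E12] by simp
  have L17: "2 * (u 17 - ((-1) * u 3)) = (-10) * ((-12) * u 0 + (6) * u 1 + (-6) * u 2 + (-2) * u 6 + (6) * u 7 + (-6) * u 8 + (2) * u 9 + (-2) * u 10 + (-4) * u 11 + (3) * u 13 + (1) * u 14 + (-4) * u 15 + (1) * u 16 + (3) * u 18) + (60) * ((-2) * u 0 + (3) * u 1 + (-3) * u 2 + (-9) * u 5 + (24) * u 6 + (-15) * u 7 + (-3) * u 8 + (3) * u 9 + (3) * u 10 + (-9) * u 12 + (6) * u 13 + (3) * u 14 + (-6) * u 16 + (9) * u 17 + (-3) * u 18) + (-20) * ((4) * u 1 + (-2) * u 2 + (-4) * u 5 + (11) * u 6 + (-8) * u 7 + (1) * u 9 + (2) * u 10 + (1) * u 11 + (-4) * u 12 + (2) * u 13 + (1) * u 14 + (1) * u 15 + (-3) * u 16 + (4) * u 17 + (-2) * u 18) + (20) * ((-2) * u 1 + (4) * u 2 + (4) * u 5 + (-11) * u 6 + (8) * u 7 + (-1) * u 9 + (-2) * u 10 + (-1) * u 11 + (4) * u 12 + (-2) * u 13 + (-1) * u 14 + (-1) * u 15 + (3) * u 16 + (-4) * u 17 + (2) * u 18) + (144) * ((2) * u 3 + (-1) * u 4 + (-1) * u 11 + (1) * u 12 + (-1) * u 14 + (1) * u 15 + (-1) * u 16 + (1) * u 17) + (286) * ((-1) * u 3 + (2) * u 4 + (-1)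 * u 5 + (1) * u 11 + (1) * u 14 + (-1) * u 15) + (428) * ((-1) * u 4 + (2) * u 5 + (-1) * u 6 + (-1) * u 14 + (1) * u 16 + (-1) * u 17 + (1) * u 18) + (190) * ((-1) * u 5 + (3) * u 6 + (-2) * u 7 + (-2) * u 8 + (3) * u 9 + (1) * u 10 + (-1) * u 12 + (1) * u 13 + (1) * u 15 + (-1) * u 16 + (-1) * u 18) + (-581) * ((2) * u 6 + (-2) * u 7 + (2) * u 8 + (-3) * u 9 + (-1) * u 12 + (1) * u 14 + (-2) * u 15 + (-1) * u 16 + (2) * u 17 + (3) * u 18) + (297) * ((4) * u 8 + (-5) * u 9 + (-2) * u 10 + (-1) * u 12 + (2) * u 13 + (-1) * u 14 + (-2) * u 15 + (1) * u 16 + (2) * u 17 + (1) * u 18) + (-237) * ((-2) * u 8 + (4) * u 9 + (4) * u 13 + (-4) * u 14 + (2) * u 15 + (4) * u 16 + (-2) * u 17 + (-6) * u 18) + (-71) * ((2) * u 7 + (-4) * u 10 + (2) * u 11 + (-2) * u 12 + (6) * u 13 + (-6) * u 14 + (2) * u 15 + (4) * u 16 + (-6) * u 18) + (85) * ((4) * u 13 + (-4) * u 14 + (6) * u 16 + (-6) * u 18)" by algebra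
  have P17: "u 17 = (-1) * u 3" using L17[unfolded E0 E1 E2 E3 E4 E5 E6 E7 E8 E9 E10 E11 E12] by simp
  have L11: "2 * (u 11 - ((-3) * u 1 + (1) * u 3 + (-1) * u 10 + (1) * u 12)) = (2) * ((-12) * u 0 + (6) * u 1 + (-6) * u 2 + (-2) * u 6 + (6) * u 7 + (-6) * u 8 + (2) * u 9 + (-2) * u 10 + (-4) * u 11 + (3) * u 13 + (1) * u 14 + (-4) * u 15 + (1) * u 16 + (3) * u 18) + (-12) * ((-2) * u 0 + (3) * u 1 + (-3) * u 2 + (-9) * u 5 + (24) * u 6 + (-15) * u 7 + (-3) * u 8 + (3) * u 9 + (3) * u 10 + (-9) * u 12 + (6) * u 13 + (3) * u 14 + (-6) * u 16 + (9) * u 17 + (-3) * u 18) + (6) * ((4) * u 1 + (-2) * u 2 + (-4) * u 5 + (11) * u 6 + (-8) * u 7 + (1) * u 9 + (2) * u 10 + (1) * u 11 + (-4) * u 12 + (2) * u 13 + (1) * u 14 + (1) * u 15 + (-3) * u 16 + (4) * u 17 + (-2) * u 18) + (-3) * ((-2) * u 1 + (4) * u 2 + (4) * u 5 + (-11) * u 6 + (8) * u 7 + (-1) * u 9 + (-2) * u 10 + (-1) * u 11 + (4) * u 12 + (-2) * u 13 + (-1) * u 14 + (-1) * u 15 + (3) * u 16 + (-4) * u 17 + (2) * u 18) + (-25) * ((2) * u 3 + (-1) * u 4 + (-1) * u 11 + (1) * u 12 + (-1) * u 14 + (1) * u 15 + (-1) * u 16 + (1) * u 17) + (-48) * ((-1)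 * u 3 + (2) * u 4 + (-1) * u 5 + (1) * u 11 + (1) * u 14 + (-1) * u 15) + (-71) * ((-1) * u 4 + (2) * u 5 + (-1) * u 6 + (-1) * u 14 + (1) * u 16 + (-1) * u 17 + (1) * u 18) + (-22) * ((-1) * u 5 + (3) * u 6 + (-2) * u 7 + (-2) * u 8 + (3) * u 9 + (1) * u 10 + (-1) * u 12 + (1) * u 13 + (1) * u 15 + (-1) * u 16 + (-1) * u 18) + (94) * ((2) * u 6 + (-2) * u 7 + (2) * u 8 + (-3) * u 9 + (-1) * u 12 + (1) * u 14 + (-2) * u 15 + (-1) * u 16 + (2) * u 17 + (3) * u 18) + (-47) * ((4) * u 8 + (-5) * u 9 + (-2) * u 10 + (-1) * u 12 + (2) * u 13 + (-1) * u 14 + (-2) * u 15 + (1) * u 16 + (2) * u 17 + (1) * u 18) + (34) * ((-2) * u 8 + (4) * u 9 + (4) * u 13 + (-4) * u 14 + (2) * u 15 + (4) * u 16 + (-2) * u 17 + (-6) * u 18) + (12) * ((2) * u 7 + (-4) * u 10 + (2) * u 11 + (-2) * u 12 + (6) * u 13 + (-6) * u 14 + (2) * u 15 + (4) * u 16 + (-6) * u 18) + (-11) * ((4) * u 13 + (-4) * u 14 + (6) * u 16 + (-6) * u 18)" by algebra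
  have P11: "u 11 = (-3) * u 1 + (1) * u 3 + (-1) * u 10 + (1) * u 12" using L11[unfolded E0 E1 E2 E3 E4 E5 E6 E7 E8 E9 E10 E11 E12] by simp
  have L6: "2 * (u 6 - ((3) * u 1 + (1) * u 9 + (2) * u 10)) = (4) * ((-12) * u 0 + (6) * u 1 + (-6) * u 2 + (-2) * u 6 + (6) * u 7 + (-6) * u 8 + (2) * u 9 + (-2) * u 10 + (-4) * u 11 + (3) * u 13 + (1) * u 14 + (-4) * u 15 + (1) * u 16 + (3) * u 18) + (-24) * ((-2) * u 0 + (3) * u 1 + (-3) * u 2 + (-9) * u 5 + (24) * u 6 + (-15) * u 7 + (-3) * u 8 + (3) * u 9 + (3) * u 10 + (-9) * u 12 + (6) * u 13 + (3) * u 14 + (-6) * u 16 + (9) * u 17 + (-3) * u 18) + (6) * ((4) * u 1 + (-2) * u 2 + (-4) * u 5 + (11) * u 6 + (-8) * u 7 + (1) * u 9 + (2) * u 10 + (1) * u 11 + (-4) * u 12 + (2) * u 13 + (1) * u 14 + (1) * u 15 + (-3) * u 16 + (4) * u 17 + (-2) * u 18) + (-9) * ((-2) * u 1 + (4) * u 2 + (4) * u 5 + (-11) * u 6 + (8) * u 7 + (-1) * u 9 + (-2) * u 10 + (-1) * u 11 + (4) * u 12 + (-2) * u 13 + (-1) * u 14 + (-1) * u 15 + (3) * u 16 + (-4) * u 17 + (2) * u 18) + (-63) * ((2) * u 3 + (-1) * u 4 + (-1) * u 11 + (1) * u 12 + (-1) * u 14 + (1) * u 15 + (-1) * u 16 +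 (1) * u 17) + (-126) * ((-1) * u 3 + (2) * u 4 + (-1) * u 5 + (1) * u 11 + (1) * u 14 + (-1) * u 15) + (-189) * ((-1) * u 4 + (2) * u 5 + (-1) * u 6 + (-1) * u 14 + (1) * u 16 + (-1) * u 17 + (1) * u 18) + (-96) * ((-1) * u 5 + (3) * u 6 + (-2) * u 7 + (-2) * u 8 + (3) * u 9 + (1) * u 10 + (-1) * u 12 + (1) * u 13 + (1) * u 15 + (-1) * u 16 + (-1) * u 18) + (260) * ((2) * u 6 + (-2) * u 7 + (2) * u 8 + (-3) * u 9 + (-1) * u 12 + (1) * u 14 + (-2) * u 15 + (-1) * u 16 + (2) * u 17 + (3) * u 18) + (-135) * ((4) * u 8 + (-5) * u 9 + (-2) * u 10 + (-1) * u 12 + (2) * u 13 + (-1) * u 14 + (-2) * u 15 + (1) * u 16 + (2) * u 17 + (1) * u 18) + (110) * ((-2) * u 8 + (4) * u 9 + (4) * u 13 + (-4) * u 14 + (2) * u 15 + (4) * u 16 + (-2) * u 17 + (-6) * u 18) + (32) * ((2) * u 7 + (-4) * u 10 + (2) * u 11 + (-2) * u 12 + (6) * u 13 + (-6) * u 14 + (2) * u 15 + (4) * u 16 + (-6) * u 18) + (-41) * ((4) * u 13 + (-4) * u 14 + (6) * u 16 + (-6) * u 18)" by algebra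
  have P6: "u 6 = (3) * u 1 + (1) * u 9 + (2) * u 10" using L6[unfolded E0 E1 E2 E3 E4 E5 E6 E7 E8 E9 E10 E11 E12] by simp
  have L13: "1 * (u 13 - ((-1) * u 9 + (1) * u 12)) = (-5) * ((-12) * u 0 + (6) * u 1 + (-6) * u 2 + (-2) * u 6 + (6) * u 7 + (-6) * u 8 + (2) * u 9 + (-2) * u 10 + (-4) * u 11 + (3) * u 13 + (1) * u 14 + (-4) * u 15 + (1) * u 16 + (3) * u 18) + (30) * ((-2) * u 0 + (3) * u 1 + (-3) * u 2 + (-9) * u 5 + (24) * u 6 + (-15) * u 7 + (-3) * u 8 + (3) * u 9 + (3) * u 10 + (-9) * u 12 + (6) * u 13 + (3) * u 14 + (-6) * u 16 + (9) * u 17 + (-3) * u 18) + (-10) * ((4) * u 1 + (-2) * u 2 + (-4) * u 5 + (11) * u 6 + (-8) * u 7 + (1) * u 9 + (2) * u 10 + (1) * u 11 + (-4) * u 12 + (2) * u 13 + (1) * u 14 + (1) * u 15 + (-3) * u 16 + (4) * u 17 + (-2) * u 18) + (10) * ((-2) * u 1 + (4) * u 2 + (4) * u 5 + (-11) * u 6 + (8) * u 7 + (-1) * u 9 + (-2) * u 10 + (-1) * u 11 + (4) * u 12 + (-2) * u 13 + (-1) * u 14 + (-1) * u 15 + (3) * u 16 + (-4) * u 17 + (2) * u 18) + (72) * ((2) * u 3 + (-1) * u 4 + (-1) * u 11 + (1) * u 12 + (-1) * u 14 + (1) * u 15 + (-1) * u 16 + (1) * u 17) + (144) * ((-1) * u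 3 + (2) * u 4 + (-1) * u 5 + (1) * u 11 + (1) * u 14 + (-1) * u 15) + (216) * ((-1) * u 4 + (2) * u 5 + (-1) * u 6 + (-1) * u 14 + (1) * u 16 + (-1) * u 17 + (1) * u 18) + (98) * ((-1) * u 5 + (3) * u 6 + (-2) * u 7 + (-2) * u 8 + (3) * u 9 + (1) * u 10 + (-1) * u 12 + (1) * u 13 + (1) * u 15 + (-1) * u 16 + (-1) * u 18) + (-294) * ((2) * u 6 + (-2) * u 7 + (2) * u 8 + (-3) * u 9 + (-1) * u 12 + (1) * u 14 + (-2) * u 15 + (-1) * u 16 + (2) * u 17 + (3) * u 18) + (151) * ((4) * u 8 + (-5) * u 9 + (-2) * u 10 + (-1) * u 12 + (2) * u 13 + (-1) * u 14 + (-2) * u 15 + (1) * u 16 + (2) * u 17 + (1) * u 18) + (-120) * ((-2) * u 8 + (4) * u 9 + (4) * u 13 + (-4) * u 14 + (2) * u 15 + (4) * u 16 + (-2) * u 17 + (-6) * u 18) + (-36) * ((2) * u 7 + (-4) * u 10 + (2) * u 11 + (-2) * u 12 + (6) * u 13 + (-6) * u 14 + (2) * u 15 + (4) * u 16 + (-6) * u 18) + (43) * ((4) * u 13 + (-4) * u 14 + (6) * u 16 + (-6) * u 18)" by algebra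
  have P13: "u 13 = (-1) * u 9 + (1) * u 12" using L13[unfolded E0 E1 E2 E3 E4 E5 E6 E7 E8 E9 E10 E11 E12] by simp
  have L7: "2 * (u 7 - ((3) * u 1 + (1) * u 9 + (2) * u 10)) = (2) * ((-12) * u 0 + (6) * u 1 + (-6) * u 2 + (-2) * u 6 + (6) * u 7 + (-6) * u 8 + (2) * u 9 + (-2) * u 10 + (-4) * u 11 + (3) * u 13 + (1) * u 14 + (-4) * u 15 + (1) * u 16 + (3) * u 18) + (-12) * ((-2) * u 0 + (3) * u 1 + (-3) * u 2 + (-9) * u 5 + (24) * u 6 + (-15) * u 7 + (-3) * u 8 + (3) * u 9 + (3) * u 10 + (-9) * u 12 + (6) * u 13 + (3) * u 14 + (-6) * u 16 + (9) * u 17 + (-3) * u 18) + (2) * ((4) * u 1 + (-2) * u 2 + (-4) * u 5 + (11) * u 6 + (-8) * u 7 + (1) * u 9 + (2) * u 10 + (1) * u 11 + (-4) * u 12 + (2) * u 13 + (1) * u 14 + (1) * u 15 + (-3) * u 16 + (4) * u 17 + (-2) * u 18) + (-5) * ((-2) * u 1 + (4) * u 2 + (4) * u 5 + (-11) * u 6 + (8) * u 7 + (-1) * u 9 + (-2) * u 10 + (-1) * u 11 + (4) * u 12 + (-2) * u 13 + (-1) * u 14 + (-1) * u 15 + (3) * u 16 + (-4) * u 17 + (2) * u 18) + (-33) * ((2) * u 3 + (-1) * u 4 + (-1) * u 11 + (1) * u 12 + (-1) * u 14 + (1) * u 15 + (-1) * u 16 + (1) * u 17) + (-66) * ((-1)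 * u 3 + (2) * u 4 + (-1) * u 5 + (1) * u 11 + (1) * u 14 + (-1) * u 15) + (-99) * ((-1) * u 4 + (2) * u 5 + (-1) * u 6 + (-1) * u 14 + (1) * u 16 + (-1) * u 17 + (1) * u 18) + (-52) * ((-1) * u 5 + (3) * u 6 + (-2) * u 7 + (-2) * u 8 + (3) * u 9 + (1) * u 10 + (-1) * u 12 + (1) * u 13 + (1) * u 15 + (-1) * u 16 + (-1) * u 18) + (136) * ((2) * u 6 + (-2) * u 7 + (2) * u 8 + (-3) * u 9 + (-1) * u 12 + (1) * u 14 + (-2) * u 15 + (-1) * u 16 + (2) * u 17 + (3) * u 18) + (-71) * ((4) * u 8 + (-5) * u 9 + (-2) * u 10 + (-1) * u 12 + (2) * u 13 + (-1) * u 14 + (-2) * u 15 + (1) * u 16 + (2) * u 17 + (1) * u 18) + (58) * ((-2) * u 8 + (4) * u 9 + (4) * u 13 + (-4) * u 14 + (2) * u 15 + (4) * u 16 + (-2) * u 17 + (-6) * u 18) + (17) * ((2) * u 7 + (-4) * u 10 + (2) * u 11 + (-2) * u 12 + (6) * u 13 + (-6) * u 14 + (2) * u 15 + (4) * u 16 + (-6) * u 18) + (-22) * ((4) * u 13 + (-4) * u 14 + (6) * u 16 + (-6) * u 18)" by algebra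
  have P7: "u 7 = (3) * u 1 + (1) * u 9 + (2) * u 10" using L7[unfolded E0 E1 E2 E3 E4 E5 E6 E7 E8 E9 E10 E11 E12] by simp
  have L8: "2 * (u 8 - ((1) * u 9 + (1) * u 10)) = (-2) * ((2) * u 3 + (-1) * u 4 + (-1) * u 11 + (1) * u 12 + (-1) * u 14 + (1) * u 15 + (-1) * u 16 + (1) * u 17) + (-4) * ((-1) * u 3 + (2) * u 4 + (-1) * u 5 + (1) * u 11 + (1) * u 14 + (-1) * u 15) + (-6) * ((-1) * u 4 + (2) * u 5 + (-1) * u 6 + (-1) * u 14 + (1) * u 16 + (-1) * u 17 + (1) * u 18) + (-8) * ((-1) * u 5 + (3) * u 6 + (-2) * u 7 + (-2) * u 8 + (3) * u 9 + (1) * u 10 + (-1) * u 12 + (1) * u 13 + (1) * u 15 + (-1) * u 16 + (-1) * u 18) + (9) * ((2) * u 6 + (-2) * u 7 + (2) * u 8 + (-3) * u 9 + (-1) * u 12 + (1) * u 14 + (-2) * u 15 + (-1) * u 16 + (2) * u 17 + (3) * u 18) + (-5) * ((4) * u 8 + (-5) * u 9 + (-2) * u 10 + (-1) * u 12 + (2) * u 13 + (-1) * u 14 + (-2) * u 15 + (1) * u 16 + (2) * u 17 + (1) * u 18) + (6) * ((-2) * u 8 + (4) * u 9 + (4) * u 13 + (-4) * u 14 + (2) * u 15 + (4) * u 16 + (-2) * u 17 + (-6) * u 18) + (1) * ((2) * u 7 + (-4) * u 10 + (2) * u 11 + (-2) * u 12 + (6) * u 13 + (-6) * u 14 + (2)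 * u 15 + (4) * u 16 + (-6) * u 18) + (-3) * ((4) * u 13 + (-4) * u 14 + (6) * u 16 + (-6) * u 18)" by algebra
  have P8: "u 8 = (1) * u 9 + (1) * u 10" using L8[unfolded E0 E1 E2 E3 E4 E5 E6 E7 E8 E9 E10 E11 E12] by simp
  have L4: "2 * (u 4 - ((3) * u 1 + (-1) * u 3 + (2) * u 10 + (-1) * u 12)) = (-6) * ((-12) * u 0 + (6) * u 1 + (-6) * u 2 + (-2) * u 6 + (6) * u 7 + (-6) * u 8 + (2) * u 9 + (-2) * u 10 + (-4) * u 11 + (3) * u 13 + (1) * u 14 + (-4) * u 15 + (1) * u 16 + (3) * u 18) + (36) * ((-2) * u 0 + (3) * u 1 + (-3) * u 2 + (-9) * u 5 + (24) * u 6 + (-15) * u 7 + (-3) * u 8 + (3) * u 9 + (3) * u 10 + (-9) * u 12 + (6) * u 13 + (3) * u 14 + (-6) * u 16 + (9) * u 17 + (-3) * u 18) + (-14) * ((4) * u 1 + (-2) * u 2 + (-4) * u 5 + (11) * u 6 + (-8) * u 7 + (1) * u 9 + (2) * u 10 + (1) * u 11 + (-4) * u 12 + (2) * u 13 + (1) * u 14 + (1) * u 15 + (-3) * u 16 + (4) * u 17 + (-2) * u 18) + (11) * ((-2) * u 1 + (4) * u 2 + (4) * u 5 + (-11) * u 6 + (8) * u 7 + (-1) * u 9 + (-2) * u 10 + (-1) * u 11 + (4) * u 12 + (-2) * u 13 + (-1) * u 14 + (-1) * u 15 + (3) * u 16 + (-4) * u 17 + (2) * u 18) + (81) * ((2)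 * u 3 + (-1) * u 4 + (-1) * u 11 + (1) * u 12 + (-1) * u 14 + (1) * u 15 + (-1) * u 16 + (1) * u 17) + (160) * ((-1) * u 3 + (2) * u 4 + (-1) * u 5 + (1) * u 11 + (1) * u 14 + (-1) * u 15) + (237) * ((-1) * u 4 + (2) * u 5 + (-1) * u 6 + (-1) * u 14 + (1) * u 16 + (-1) * u 17 + (1) * u 18) + (90) * ((-1) * u 5 + (3) * u 6 + (-2) * u 7 + (-2) * u 8 + (3) * u 9 + (1) * u 10 + (-1) * u 12 + (1) * u 13 + (1) * u 15 + (-1) * u 16 + (-1) * u 18) + (-317) * ((2) * u 6 + (-2) * u 7 + (2) * u 8 + (-3) * u 9 + (-1) * u 12 + (1) * u 14 + (-2) * u 15 + (-1) * u 16 + (2) * u 17 + (3) * u 18) + (160) * ((4) * u 8 + (-5) * u 9 + (-2) * u 10 + (-1) * u 12 + (2) * u 13 + (-1) * u 14 + (-2) * u 15 + (1) * u 16 + (2) * u 17 + (1) * u 18) + (-123) * ((-2) * u 8 + (4) * u 9 + (4) * u 13 + (-4) * u 14 + (2) * u 15 + (4) * u 16 + (-2) * u 17 + (-6) * u 18) + (-39) * ((2) * u 7 + (-4) * u 10 + (2) * u 11 + (-2) * u 12 + (6) * u 13 + (-6) * u 14 + (2) * u 15 + (4) * u 16 + (-6) * u 18) + (42) * ((4) * u 13 + (-4) * u 14 + (6) * u 16 + (-6) * u 18)" by algebra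
  have P4: "u 4 = (3) * u 1 + (-1) * u 3 + (2) * u 10 + (-1) * u 12" using L4[unfolded E0 E1 E2 E3 E4 E5 E6 E7 E8 E9 E10 E11 E12] by simp
  have L2: "2 * (u 2 - ((-1) * u 1)) = (1) * ((4) * u 1 + (-2) * u 2 + (-4) * u 5 + (11) * u 6 + (-8) * u 7 + (1) * u 9 + (2) * u 10 + (1) * u 11 + (-4) * u 12 + (2) * u 13 + (1) * u 14 + (1) * u 15 + (-3) * u 16 + (4) * u 17 + (-2) * u 18) + (1) * ((-2) * u 1 + (4) * u 2 + (4) * u 5 + (-11) * u 6 + (8) * u 7 + (-1) * u 9 + (-2) * u 10 + (-1) * u 11 + (4) * u 12 + (-2) * u 13 + (-1) * u 14 + (-1) * u 15 + (3) * u 16 + (-4) * u 17 + (2) * u 18)" by algebra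
  have P2: "u 2 = (-1) * u 1" using L2[unfolded E0 E1 E2 E3 E4 E5 E6 E7 E8 E9 E10 E11 E12] by simp
  have R0: "(\<Sum>l<19. of_int (Gl!0!l) * u l) = (-2) * u 0"
    unfolding sum19e by (simp add: Gl_def)
  have R1: "(\<Sum>l<19. of_int (Gl!1!l) * u l) = (2) * u 1 + (-1) * u 2"
    unfolding sum19e by (simp add: Gl_def)
  have R2: "(\<Sum>l<19. of_int (Gl!2!l) * u l) = (-1) * u 1 + (2) * u 2"
    unfolding sum19e by (simp add: Gl_def)
  have R3: "(\<Sum>l<19. of_int (Gl!3!l) * u l) = (2) * u 3 + (-1) * u 4"
    unfolding sum19e by (simp add: Gl_def)
  have R4: "(\<Sum>l<19. of_int (Gl!4!l) * u l) = (-1) * u 3 + (2) * u 4 + (-1) * u 5"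
    unfolding sum19e by (simp add: Gl_def)
  have R5: "(\<Sum>l<19. of_int (Gl!5!l) * u l) = (-1) * u 4 + (2) * u 5 + (-1) * u 6"
    unfolding sum19e by (simp add: Gl_def)
  have R6: "(\<Sum>l<19. of_int (Gl!6!l) * u l) = (-1) * u 5 + (2) * u 6 + (-1) * u 7"
    unfolding sum19e by (simp add: Gl_def)
  have R7: "(\<Sum>l<19. of_int (Gl!7!l) * u l) = (-1) * u 6 + (2) * u 7 + (-1) * u 8 + (-1) * u 10"
    unfolding sum19e by (simp add: Gl_def)
  have R8: "(\<Sum>l<19. of_int (Gl!8!l) * u l) = (-1) * u 7 + (2) * u 8 + (-1) * u 9"
    unfolding sum19e by (simp add: Gl_def)
  have R9: "(\<Sum>l<19. of_int (Gl!9!l) * u l) = (-1) * u 8 + (2) * u 9"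
    unfolding sum19e by (simp add: Gl_def)
  have R10: "(\<Sum>l<19. of_int (Gl!10!l) * u l) = (-1) * u 7 + (2) * u 10"
    unfolding sum19e by (simp add: Gl_def)
  have R11: "(\<Sum>l<19. of_int (Gl!11!l) * u l) = (2) * u 11 + (-1) * u 12"
    unfolding sum19e by (simp add: Gl_def)
  have R12: "(\<Sum>l<19. of_int (Gl!12!l) * u l) = (-1) * u 11 + (2) * u 12 + (-1) * u 13"
    unfolding sum19e by (simp add: Gl_def)
  have R13: "(\<Sum>l<19. of_int (Gl!13!l) * u l) = (-1) * u 12 + (2) * u 13 + (-1) * u 14"
    unfolding sum19e by (simp add: Gl_def)
  have R14: "(\<Sum>l<19. of_int (Gl!14!l) * u l) = (-1) * u 13 + (2) * u 14 + (-1) * u 15"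
    unfolding sum19e by (simp add: Gl_def)
  have R15: "(\<Sum>l<19. of_int (Gl!15!l) * u l) = (-1) * u 14 + (2) * u 15 + (-1) * u 16 + (-1) * u 18"
    unfolding sum19e by (simp add: Gl_def)
  have R16: "(\<Sum>l<19. of_int (Gl!16!l) * u l) = (-1) * u 15 + (2) * u 16 + (-1) * u 17"
    unfolding sum19e by (simp add: Gl_def)
  have R17: "(\<Sum>l<19. of_int (Gl!17!l) * u l) = (-1) * u 16 + (2) * u 17"
    unfolding sum19e by (simp add: Gl_def)
  have R18: "(\<Sum>l<19. of_int (Gl!18!l) * u l) = (-1) * u 15 + (2) * u 18"
    unfolding sum19e by (simp add: Gl_def)
  have B: "(\<Sum>k<19. u k * (\<Sum>l<19. of_int (Gl!k!l) * u l)) = u 0 * ((-2) * u 0) + u 1 * ((2) * u 1 + (-1) * u 2) + u 2 * ((-1) * u 1 + (2) * u 2) + u 3 * ((2) * u 3 + (-1) * u 4) + u 4 * ((-1) * u 3 + (2) * u 4 + (-1) * u 5) + u 5 * ((-1) * u 4 + (2) * u 5 + (-1) * u 6) + u 6 * ((-1) * u 5 + (2) * u 6 + (-1) * u 7) + u 7 * ((-1) * u 6 + (2) * u 7 + (-1) * u 8 + (-1) * u 10) + u 8 * ((-1) * u 7 + (2) * u 8 + (-1) * u 9) + u 9 * ((-1) * u 8 + (2) * u 9) + u 10 * ((-1) * u 7 + (2) * u 10) + u 11 * ((2) * u 11 + (-1) * u 12) + u 12 * ((-1) * u 11 + (2) * u 12 + (-1) * u 13) + u 13 * ((-1) * u 12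 + (2) * u 13 + (-1) * u 14) + u 14 * ((-1) * u 13 + (2) * u 14 + (-1) * u 15) + u 15 * ((-1) * u 14 + (2) * u 15 + (-1) * u 16 + (-1) * u 18) + u 16 * ((-1) * u 15 + (2) * u 16 + (-1) * u 17) + u 17 * ((-1) * u 16 + (2) * u 17) + u 18 * ((-1) * u 15 + (2) * u 18)"
    unfolding sum19e[where f="\<lambda>k. u k * (\<Sum>l<19. of_int (Gl!k!l) * u l)"] R0 R1 R2 R3 R4 R5 R6 R7 R8 R9 R10 R11 R12 R13 R14 R15 R16 R17 R18 by (rule refl)
  obtain y1 where Y1: "u 1 = of_int y1" using int[rule_format, of 1] Ints_cases by auto
  obtain y3 where Y3: "u 3 = of_int y3" using int[rule_format, of 3] Ints_cases by auto
  obtain y9 where Y9: "u 9 = of_int y9" using int[rule_format, of 9] Ints_cases by auto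
  obtain y10 where Y10: "u 10 = of_int y10" using int[rule_format, of 10] Ints_cases by auto
  obtain y12 where Y12: "u 12 = of_int y12" using int[rule_format, of 12] Ints_cases by auto
  obtain y18 where Y18: "u 18 = of_int y18" using int[rule_format, of 18] Ints_cases by auto
  have Q: "(\<Sum>k<19. u k * (\<Sum>l<19. of_int (Gl!k!l) * u l)) = 4 * ((6) * real_of_int y1 * real_of_int y1 + (-6) * real_of_int y1 * real_of_int y3 + (6) * real_of_int y1 * real_of_int y10 + (-3) * real_of_int y1 * real_of_int y12 + (3) * real_of_int y3 * real_of_int y3 + (1) * real_of_int y3 * real_of_int y9 + (-4) * real_of_int y3 * real_of_int y10 + (2) * real_of_int y3 * real_of_int y12 + (1) * real_of_int y3 * real_of_int y18 + (1) * real_of_int y9 * real_of_int y9 + (-1) * real_of_int y9 * real_of_int y10 + (1) * real_of_int y9 * real_of_int y18 + (2) * real_of_int y10 * real_of_int y10 + (-2) * real_of_int y10 * real_of_int y12 + (1) * real_of_int y12 * real_of_int y12 + (-1) * real_of_int y12 * real_of_int y18 + (1) * real_of_int y18 * real_of_int y18)"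
    unfolding B P5 P0 P15 P16 P14 P17 P11 P6 P13 P7 P8 P4 P2 Y1 Y3 Y9 Y10 Y12 Y18 by algebra
  define m where "m = (6) * y1 * y1 + (-6) * y1 * y3 + (6) * y1 * y10 + (-3) * y1 * y12 + (3) * y3 * y3 + (1) * y3 * y9 + (-4) * y3 * y10 + (2) * y3 * y12 + (1) * y3 * y18 + (1) * y9 * y9 + (-1) * y9 * y10 + (1) * y9 * y18 + (2) * y10 * y10 + (-2) * y10 * y12 + (1) * y12 * y12 + (-1) * y12 * y18 + (1) * y18 * y18"
  have Q2: "(\<Sum>k<19. u k * (\<Sum>l<19. of_int (Gl!k!l) * u l)) = of_int (4 * m)"
    unfolding Q m_def by simp
  have "4 * m \<noteq> 2" "4 * m \<noteq> 6" by presburger+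
  then show ?thesis unfolding Q2 by (metis of_int_eq_iff of_int_numeral)
qed

lemma gmap_add: "gmap (x + y) = gmap x + gmap y"
  by (rule vec_eq_cv) (simp add: cv_gmap cv_add mvr_def algebra_simps sum.distrib)
lemma gmap_scale: "gmap (c *\<^sub>R x) = c *\<^sub>R gmap x"
  by (rule vec_eq_cv) (simp add: cv_gmap cv_scale mvr_def algebra_simps sum_distrib_left)
lemma gmap_neg: "gmap (- y) = - gmap y"
  by (rule vec_eq_cv) (simp add: cv_gmap cv_minus mvr_def sum_negf)
lemma gmap_zero: "gmap 0 = 0"
  using gmap_scale[of 0 0] by simp
lemma gmap_sum: "gmap (sum f A) = (\<Sum>i\<in>A. gmap (f i))"
  by (induction A rule: infinite_finite_induct) (simp_all add: gmap_zero gmap_add)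

lemma bf_add_right: "bf x (y + z) = bf x y + bf x z"
  unfolding bf_Gl by (simp add: cv_add algebra_simps sum.distrib)
lemma bf_scale_right: "bf x (c *\<^sub>R y) = c * bf x y"
  unfolding bf_Gl by (simp add: cv_scale sum_distrib_left mult_ac)
lemma bf_zero_right: "bf x 0 = 0"
  unfolding bf_Gl by (simp add: cv_def)
lemma bf_sum_right: "bf x (sum f A) = (\<Sum>i\<in>A. bf x (f i))"
  by (induction A rule: infinite_finite_induct) (simp_all add: bf_zero_right bf_add_right)
lemma bf_neg_right: "bf x (- y) = - bf x y"
  unfolding bf_Gl by (simp add: cv_minus sum_negf)
lemma bf_neg_left: "bf (- x) y = - bf x y"
  unfolding bf_Gl by (simp add: cv_minus sum_negf)
lemma bf_diag2: "bf x x = (\<Sum>k<19. cv x k * (\<Sum>l<19. of_int (Gl!k!l) * cv x l))"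
  unfolding bf_Gl by (intro sum.cong refl) (simp add: sum_distrib_left mult_ac)

lemma Vk_gmap:
  assumes "v \<in> Vk c" shows "gmap v \<in> Vk c"
proof -
  have v: "v \<in> latL" "bf v v = c" "\<forall>w\<in>latL. 2 * bf v w / bf v v \<in> \<int>"
    using assms unfolding Vk_def by auto
  have "\<forall>w\<in>latL. 2 * bf (gmap v) w / bf (gmap v) (gmap v) \<in> \<int>"
  proof
    fix w assume w: "w \<in> latL"
    have "bf (gmap v) w = bf (gmap v) (gmap (gmap w))" by (simp add: gmap_gmap)
    also have "\<dots> = bf v (gmap w)" by (rule bf_gmap)
    finally have e: "bf (gmap v) w = bf v (gmap w)" .
    show "2 * bf (gmap v) w / bf (gmap v) (gmap v) \<in> \<int>"
      unfolding e bf_gmap using v(3) gmap_latL[OF w] by blast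
  qed
  then show ?thesis using v gmap_latL unfolding Vk_def by (simp add: bf_gmap)
qed

lemma mirrors_gmap: "x \<in> mirrors \<Longrightarrow> gmap x \<in> mirrors"
proof -
  assume "x \<in> mirrors"
  then obtain v where v: "v \<in> Vk 2 \<union> Vk 6" "bf v x = 0" unfolding mirrors_def by blast
  have "gmap v \<in> Vk 2 \<union> Vk 6" using v(1) Vk_gmap by blast
  moreover have "bf (gmap v) (gmap x) = 0" using v(2) by (simp add: bf_gmap)
  ultimately show "gmap x \<in> mirrors" unfolding mirrors_def by blast
qed

lemma mirrors_neg: "x \<in> mirrors \<Longrightarrow> - x \<in> mirrors"
  unfolding mirrors_def by (auto simp: bf_neg_right)
lemma negcone_gmap: "x \<in> negcone \<Longrightarrow> gmap x \<in> negcone"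
  unfolding negcone_def by (simp add: bf_gmap)
lemma negcone_neg: "x \<in> negcone \<Longrightarrow> - x \<in> negcone"
  unfolding negcone_def by (simp add: bf_neg_right bf_neg_left)

lemma inv_image_eq:
  assumes inv: "\<And>x. f (f x) = x" and A: "\<And>x. x \<in> A \<Longrightarrow> f x \<in> A"
  shows "f ` A = A"
proof
  show "f ` A \<subseteq> A" using A by blast
  show "A \<subseteq> f ` A"
  proof
    fix x assume "x \<in> A"
    then have "f x \<in> A" by (rule A)
    then show "x \<in> f ` A" using inv[of x] by (metis image_eqI)
  qed
qed

lemma cc_inv:
  fixes f :: "real^19 \<Rightarrow> real^19"
  assumes cont: "continuous_on UNIV f" and inv: "\<And>x. f (f x) = x"
    and Sf: "\<And>x. x \<in> S \<Longrightarrow> f x \<in> S"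
  shows "f ` connected_component_set S x = connected_component_set S (f x)"
proof -
  have sub: "f ` connected_component_set S y \<subseteq> connected_component_set S (f y)" if y: "y \<in> S" for y
  proof (rule connected_component_maximal)
    have "y \<in> connected_component_set S y" using connected_component_refl[OF y] by simp
    then show "f y \<in> f ` connected_component_set S y" by (rule imageI)
    show "connected (f ` connected_component_set S y)"
      by (rule connected_continuous_image[OF continuous_on_subset[OF cont]]) auto
    show "f ` connected_component_set S y \<subseteq> S"
      using connected_component_subset[of S y] Sf by blast
  qed
  show ?thesis
  proof (cases "x \<in> S")
    case True
    have fx: "f x \<in> S" using Sf True .
    have "connected_component_set S (f x) = f ` f ` connected_component_set S (f x)"
      by (simp add: image_image inv)
    also have "\<dots> \<subseteq> f ` connected_component_set S (f (f x))"
      using sub[OF fx] by (rule image_mono)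
    also have "\<dots> = f ` connected_component_set S x" by (simp add: inv)
    finally show ?thesis using sub[OF True] by blast
  next
    case False
    then have "f x \<notin> S" using Sf inv by metis
    then have "connected_component_set S (f x) = {}" by (rule connected_component_eq_empty[THEN iffD2])
    moreover have "connected_component_set S x = {}" using False by (rule connected_component_eq_empty[THEN iffD2])
    ultimately show ?thesis by (simp only: image_empty)
  qed
qed

lemma cell_main:
  assumes x0: "x0 \<in> negcone" "x0 \<notin> mirrors" "gmap x0 = - x0"
  shows "\<exists>Ps. lifted_cell Ps \<and> gmap ` Ps = uminus ` Ps"
proof -
  define S where "S = negcone - mirrors"
  define C where "C = connected_component_set S x0"
  define Ps where "Ps = closure C \<inter> negcone"
  have gS: "\<And>x. x \<in> S \<Longrightarrow> gmap x \<in> S"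
  proof -
    fix x assume "x \<in> S"
    then have "x \<in> negcone" "x \<notin> mirrors" unfolding S_def by auto
    moreover have "gmap x \<notin> mirrors"
    proof
      assume "gmap x \<in> mirrors"
      then have "gmap (gmap x) \<in> mirrors" by (rule mirrors_gmap)
      then show False using \<open>x \<notin> mirrors\<close> by (simp add: gmap_gmap)
    qed
    ultimately show "gmap x \<in> S" unfolding S_def using negcone_gmap by blast
  qed
  have nS: "\<And>x. x \<in> S \<Longrightarrow> - x \<in> S"
  proof -
    fix x assume "x \<in> S"
    then have "x \<in> negcone" "x \<notin> mirrors" unfolding S_def by auto
    moreover have "- x \<notin> mirrors"
    proof
      assume "- x \<in> mirrors"
      then have "- (- x) \<in> mirrors" by (rule mirrors_neg)
      then show False using \<open>x \<notin> mirrors\<close> by simp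
    qed
    ultimately show "- x \<in> S" unfolding S_def using negcone_neg by blast
  qed
  have contg: "continuous_on UNIV gmap"
    using linear_gmap by (simp add: linear_continuous_on linear_conv_bounded_linear)
  have contn: "continuous_on UNIV (uminus :: real^19 \<Rightarrow> real^19)" by (intro continuous_intros)
  have "gmap ` C = connected_component_set S (gmap x0)"
    unfolding C_def by (rule cc_inv[OF contg gmap_gmap gS])
  also have "\<dots> = connected_component_set S (- x0)" using x0(3) by simp
  also have "\<dots> = uminus ` C"
    unfolding C_def by (rule cc_inv[OF contn minus_minus nS, symmetric])
  finally have gC: "gmap ` C = uminus ` C" .
  have gN: "gmap ` negcone = negcone" by (rule inv_image_eq[OF gmap_gmap negcone_gmap])
  have nN: "uminus ` negcone = negcone" by (rule inv_image_eq[OF minus_minus negcone_neg])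
  have linn: "linear (uminus :: real^19 \<Rightarrow> real^19)" by (rule linear_uminus)
  have injn: "inj (uminus :: real^19 \<Rightarrow> real^19)" by simp
  have "gmap ` Ps = gmap ` closure C \<inter> gmap ` negcone"
    unfolding Ps_def using inj_gmap by (simp add: image_Int)
  also have "\<dots> = closure (uminus ` C) \<inter> negcone"
    using closure_injective_linear_image[OF linear_gmap inj_gmap, of C] gC gN by simp
  also have "\<dots> = uminus ` closure C \<inter> uminus ` negcone"
    using closure_injective_linear_image[OF linn injn, of C] nN by simp
  also have "\<dots> = uminus ` Ps"
    unfolding Ps_def using injn by (simp add: image_Int)
  finally have 1: "gmap ` Ps = uminus ` Ps" .
  have "x0 \<in> negcone - mirrors" using x0 by simp
  then have "lifted_cell Ps" unfolding lifted_cell_def Ps_def C_def S_def by blast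
  then show ?thesis using 1 by blast
qed

definition qv :: "int list \<Rightarrow> real^19" where "qv r = (\<chi> i. of_int (r ! idx i))"
lemma cv_qv: "k < 19 \<Longrightarrow> cv (qv r) k = of_int (r!k)"
  by (simp add: qv_def cv_def idx_ix)

lemma gmap_qv: "r \<in> set Fl \<Longrightarrow> gmap (qv r) = - qv r"
proof (rule vec_eq_cv, intro allI impI)
  fix k :: nat assume r: "r \<in> set Fl" and k: "k < 19"
  have "mvr Hl (cv (qv r)) k = (\<Sum>j<19. of_int (Hl!k!j) * of_int (r!j))"
    unfolding mvr_def by (intro sum.cong refl) (simp add: cv_qv)
  also have "\<dots> = of_int (\<Sum>j<19. Hl!k!j * r!j)" by simp
  also have "\<dots> = of_int (r!k)" using Ffix[OF r k] by simp
  finally show "cv (gmap (qv r)) k = cv (- qv r) k"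
    using k by (simp add: cv_gmap cv_minus cv_qv)
qed

definition xc :: "real \<Rightarrow> real^19" where "xc t = (\<Sum>i<13. t^i *\<^sub>R qv (Fl!i))"

lemma Fl_mem: "i < 13 \<Longrightarrow> Fl!i \<in> set Fl" using Fl_len by simp

lemma gmap_xc: "gmap (xc t) = - xc t"
proof -
  have "gmap (xc t) = (\<Sum>i<13. t^i *\<^sub>R gmap (qv (Fl!i)))"
    unfolding xc_def gmap_sum by (simp add: gmap_scale)
  also have "\<dots> = (\<Sum>i<13. - (t^i *\<^sub>R qv (Fl!i)))"
    by (intro sum.cong refl) (simp add: gmap_qv Fl_mem)
  also have "\<dots> = - xc t" unfolding xc_def by (simp add: sum_negf)
  finally show ?thesis .
qed

lemma bf_qv: "i < 13 \<Longrightarrow> bf v (qv (Fl!i)) = (\<Sum>k<19. cv v k * of_int (Cl!i!k))"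
proof -
  assume i: "i < 13"
  have "bf v (qv (Fl!i)) = (\<Sum>k<19. \<Sum>l<19. cv v k * of_int (Gl!k!l * Fl!i!l))"
    unfolding bf_Gl by (intro sum.cong refl) (simp add: cv_qv mult_ac)
  also have "\<dots> = (\<Sum>k<19. cv v k * of_int (\<Sum>l<19. Gl!k!l * Fl!i!l))"
    by (simp add: sum_distrib_left)
  also have "\<dots> = (\<Sum>k<19. cv v k * of_int (Cl!i!k))"
    by (intro sum.cong refl) (simp add: FC i)
  finally show ?thesis .
qed

lemma bf_xc: "bf v (xc t) = (\<Sum>i\<le>12. bf v (qv (Fl!i)) * t^i)"
proof -
  have e: "{..<13::nat} = {..12}" by auto
  show ?thesis unfolding xc_def bf_sum_right bf_scale_right e by (simp add: mult.commute)
qed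

lemma KLv: "v \<in> Vk 2 \<union> Vk 6 \<Longrightarrow> \<exists>i\<le>12. bf v (qv (Fl!i)) \<noteq> 0"
proof (rule ccontr)
  assume v: "v \<in> Vk 2 \<union> Vk 6" and "\<not> (\<exists>i\<le>12. bf v (qv (Fl!i)) \<noteq> 0)"
  then have z: "\<forall>i<13. (\<Sum>k<19. cv v k * of_int (Cl!i!k)) = 0"
    using bf_qv by auto
  have "v \<in> latL" using v unfolding Vk_def by auto
  then have int: "\<forall>k<19. cv v k \<in> \<int>" using latL_cv by blast
  have "bf v v = 2 \<or> bf v v = 6" using v unfolding Vk_def by auto
  moreover have "bf v v \<noteq> 2 \<and> bf v v \<noteq> 6" using KL[OF z int] unfolding bf_diag2 .
  ultimately show False by blast
qed

lemma countable_latL: "countable latL"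
proof -
  have "latL \<subseteq> range (\<lambda>z::19 \<Rightarrow> int. (\<chi> i. of_int (z i)) :: real^19)"
  proof
    fix x :: "real^19" assume "x \<in> latL"
    then have xi: "\<And>i. x$i \<in> \<int>" unfolding latL_def by auto
    have fl: "of_int \<lfloor>x$i\<rfloor> = x$i" for i
    proof -
      obtain n where "x$i = of_int n" using xi[of i] Ints_cases by blast
      then show ?thesis by simp
    qed
    have "x = (\<chi> i. of_int ((\<lambda>i. \<lfloor>x$i\<rfloor>) i))"
      unfolding vec_eq_iff vec_lambda_beta fl by simp
    then show "x \<in> range (\<lambda>z::19 \<Rightarrow> int. (\<chi> i. of_int (z i)) :: real^19)"
      by (rule image_eqI[where x="\<lambda>i. \<lfloor>x$i\<rfloor>"]) simp_all
  qed
  moreover have "countable (range (\<lambda>z::19 \<Rightarrow> int. (\<chi> i. of_int (z i)) :: real^19))"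
    by (rule countable_image) simp
  ultimately show ?thesis by (rule countable_subset)
qed

lemma F0_norm: "(\<Sum>k<19. (Fl!0)!k * (\<Sum>l<19. Gl!k!l * (Fl!0)!l)) = -2"
proof -
  have "sum_list (map (\<lambda>k. (Fl!0)!k * sum_list (map (\<lambda>l. Gl!k!l * (Fl!0)!l) [0..<19])) [0..<19]) = -2"
    unfolding Fl_def Gl_def by code_simp
  then show ?thesis by (simp add: sl19)
qed

lemma cv_xc: "k < 19 \<Longrightarrow> cv (xc t) k = (\<Sum>i<13. t^i * of_int (Fl!i!k))"
  unfolding xc_def by (simp add: cv_def cv_qv[symmetric])

lemma exists_x0: "\<exists>x0. x0 \<in> negcone \<and> x0 \<notin> mirrors \<and> gmap x0 = - x0"
proof -
  define f where "f t = bf (xc t) (xc t)" for t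
  have xc0: "xc 0 = qv (Fl!0)"
    unfolding xc_def using sum.lessThan_Suc_shift[of "\<lambda>i. (0::real)^i *\<^sub>R qv (Fl!i)" 12] by simp
  have f0: "f 0 < 0"
  proof -
    have "f 0 = (\<Sum>k<19. cv (qv (Fl!0)) k * (\<Sum>l<19. of_int (Gl!k!l) * cv (qv (Fl!0)) l))"
      unfolding f_def xc0 bf_diag2 ..
    also have "\<dots> = of_int (\<Sum>k<19. (Fl!0)!k * (\<Sum>l<19. Gl!k!l * (Fl!0)!l))"
      by (simp add: cv_qv)
    also have "\<dots> = -2" unfolding F0_norm by simp
    finally show ?thesis by simp
  qed
  have feq: "f = (\<lambda>t. \<Sum>k<19. (\<Sum>i<13. t^i * of_int (Fl!i!k)) *
                    (\<Sum>l<19. of_int (Gl!k!l) * (\<Sum>i<13. t^i * of_int (Fl!i!l))))"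
    unfolding f_def[abs_def] bf_diag2 by (intro ext sum.cong refl) (simp add: cv_xc)
  have "isCont f 0" unfolding feq by (intro continuous_intros)
  then have "(f \<longlongrightarrow> f 0) (at 0)" by (simp add: isCont_def)
  then have "eventually (\<lambda>t. f t < 0) (at 0)" using f0 by (rule order_tendstoD(2))
  then obtain d :: real where d: "d > 0" "\<And>t. t \<noteq> 0 \<Longrightarrow> dist t 0 < d \<Longrightarrow> f t < 0"
    unfolding eventually_at by auto
  define T where "T = {t \<in> {0<..<d}. xc t \<in> mirrors}"
  have "T \<subseteq> (\<Union>v\<in>Vk 2 \<union> Vk 6. {t. (\<Sum>i\<le>12. bf v (qv (Fl!i)) * t^i) = 0})"
  proof
    fix t assume "t \<in> T"
    then have "xc t \<in> mirrors" unfolding T_def by auto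
    then obtain v where "v \<in> Vk 2 \<union> Vk 6" "bf v (xc t) = 0" unfolding mirrors_def by blast
    then show "t \<in> (\<Union>v\<in>Vk 2 \<union> Vk 6. {t. (\<Sum>i\<le>12. bf v (qv (Fl!i)) * t^i) = 0})"
      unfolding bf_xc by blast
  qed
  moreover have "countable (\<Union>v\<in>Vk 2 \<union> Vk 6. {t. (\<Sum>i\<le>12. bf v (qv (Fl!i)) * t^i) = 0})"
  proof (rule countable_UN)
    show "countable (Vk 2 \<union> Vk 6)"
      by (rule countable_subset[OF _ countable_latL]) (auto simp: Vk_def)
    fix v assume "v \<in> Vk 2 \<union> Vk 6"
    then obtain k where "k \<le> 12" "bf v (qv (Fl!k)) \<noteq> 0" using KLv by blast
    then have "finite {t. (\<Sum>i\<le>12. bf v (qv (Fl!i)) * t^i) = 0}"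
      by (rule polyfun_roots_finite[rotated])
    then show "countable {t. (\<Sum>i\<le>12. bf v (qv (Fl!i)) * t^i) = 0}" by (rule countable_finite)
  qed
  ultimately have cT: "countable T" by (rule countable_subset)
  have "\<not> {0<..<d} \<subseteq> T"
  proof
    assume "{0<..<d} \<subseteq> T"
    then have "countable {0<..<d}" using cT by (rule countable_subset)
    then show False using uncountable_open_interval d(1) by blast
  qed
  then obtain t where t: "t \<in> {0<..<d}" "t \<notin> T" by blast
  have "f t < 0" using t(1) by (intro d(2)) (auto simp: dist_real_def)
  then have "xc t \<in> negcone" unfolding negcone_def f_def by simp
  moreover have "xc t \<notin> mirrors" using t unfolding T_def by auto
  ultimately show ?thesis using gmap_xc by blast
qed

theorem corollary7p6p2:
  shows "\<exists>Ps g. lifted_cell Ps \<and> autL g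
           \<and> g ` (Ps \<union> uminus ` Ps) = Ps \<union> uminus ` Ps
           \<and> g ` Ps = uminus ` Ps
           \<and> Z3_direct g"
proof -
  obtain x0 where x0: "x0 \<in> negcone" "x0 \<notin> mirrors" "gmap x0 = - x0"
    using exists_x0 by blast
  obtain Ps where P: "lifted_cell Ps" "gmap ` Ps = uminus ` Ps"
    using cell_main[OF x0] by blast
  have a: "gmap ` uminus ` Ps = uminus ` gmap ` Ps" by (simp add: image_image gmap_neg)
  have b: "uminus ` uminus ` Ps = Ps" by (simp add: image_image)
  have "gmap ` (Ps \<union> uminus ` Ps) = uminus ` Ps \<union> Ps"
    unfolding image_Un a P(2) b ..
  then have "gmap ` (Ps \<union> uminus ` Ps) = Ps \<union> uminus ` Ps" by blast
  then show ?thesis using P autL_gmap Z3_gmap by blast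
qed

end
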